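(* Let $(G_n)$ be a sequence of graphs with $\min_{v\in V}\delta_v=\omega(\log n)$, let $k\ge3$ be odd, $q\in(1/2,1]$ and $0\le p<p^\star_{k,q}$. Run the $(k,p,\mathcal B)$-Edge-Majority dynamics from the random initial configuration in which each node is $\mathcal R$ with probability $q$, independently. Let $q_0=q$ and $q_{t+1}=F_{p,k}(q_t)$. If $q\in(\mu_{p,k},1]$, then for all $\gamma>0$ and $K>0$, $$\Pr\big(\forall t\le n^K,\ \forall v\in V:\ \phi_v^{(t)}\in[q_t-\gamma,q_t+\gamma]\big)=1-o(1).$$
   Context: $G_n=(V,E)$, $V=\{1,\dots,n\}$, $N(u)$ neighbourhood, $\delta_u=|N(u)|$; asymptotics as $n\to\infty$. States in $\{\mathcal R,\mathcal B\}$; $R^{(t)}$ the $\mathcal R$ nodes at round $t$; $\phi_u^{(t)}=|N(u)\cap R^{(t)}|/\delta_u$. $(k,p,\mathcal B)$-Edge-Majority: in each round $t\ge1$ every node $u$ independently samples $k$ neighbours uniformly with replacement; for each sampled $v$, independently, $u$ sees $v$ as $\mathcal B$ with probability $p$ and otherwise sees $v$'s true state at round $t-1$; $u$ adopts the state seen more often. $F_{p,k}(x)=\Pr[\mathrm{Bin}(k,(1-p)x)\ge(k+1)/2]$. $p_k^\star\in[1/9,1/2)$ is the (unique) value such that for $0\le p<p_k^\star$, $F_{p,k}(x)=x$ on $[0,1]$ has exactly three solutions $0<\varphi^-_{p,k}<\varphi^+_{p,k}$; for $p=p_k^\star$ exactly two, $0$ and $\varphi_{p,k}$ (set $\varphi^-_{p_k^\star,k}=\varphi_{p_k^\star,k}$);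 for $p>p_k^\star$ only $0$. $p^\star_{k,q}=\max\{p\in[0,p_k^\star]:\varphi^-_{p,k}\le q\}$. For $0\le p<p_k^\star$, $\mu_{p,k}$ is the unique point of $(\varphi^-_{p,k},\varphi^+_{p,k})$ with $F'_{p,k}(\mu_{p,k})=1$ (so that $0\le F'_{p,k}<1$ on $(\mu_{p,k},1]$). *)

theory Defs
  imports "HOL-Probability.Probability" "HOL-Library.Landau_Symbols"
begin

text \<open>Graph sequence: E n is the adjacency relation of G_n on V = {1..n}.
 A configuration is a function nat => bool, True meaning state R (red), False meaning B.\<close>

definition nbhd :: "(nat \<Rightarrow> nat \<Rightarrow> nat \<Rightarrow> bool) \<Rightarrow> nat \<Rightarrow> nat \<Rightarrow> nat set" where
  "nbhd E n u = {v \<in> {1..n}. E n u v}"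

definition min_degree :: "(nat \<Rightarrow> nat \<Rightarrow> nat \<Rightarrow> bool) \<Rightarrow> nat \<Rightarrow> nat" where
  "min_degree E n = Min ((\<lambda>u. card (nbhd E n u)) ` {1..n})"

definition phi :: "(nat \<Rightarrow> nat \<Rightarrow> nat \<Rightarrow> bool) \<Rightarrow> nat \<Rightarrow> (nat \<Rightarrow> bool) \<Rightarrow> nat \<Rightarrow> real" where
  "phi E n x u = real (card {v \<in> nbhd E n u. x v}) / real (card (nbhd E n u))"

definition seen :: "(nat \<Rightarrow> nat \<Rightarrow> nat \<Rightarrow> bool) \<Rightarrow> nat \<Rightarrow> real \<Rightarrow> (nat \<Rightarrow> bool) \<Rightarrow> nat \<Rightarrow> bool pmf" where
  "seen E n p x u =
     bind_pmf (pmf_of_set (nbhd E n u)) (\<lambda>v.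
     bind_pmf (bernoulli_pmf p) (\<lambda>b. return_pmf (\<not> b \<and> x v)))"

definition node_update :: "(nat \<Rightarrow> nat \<Rightarrow> nat \<Rightarrow> bool) \<Rightarrow> nat \<Rightarrow> nat \<Rightarrow> real \<Rightarrow> (nat \<Rightarrow> bool) \<Rightarrow> nat \<Rightarrow> bool pmf" where
  "node_update E n k p x u =
     map_pmf (\<lambda>s. card {i \<in> {..<k}. s i} > card {i \<in> {..<k}. \<not> s i})
       (Pi_pmf {..<k} False (\<lambda>_. seen E n p x u))"

definition em_step :: "(nat \<Rightarrow> nat \<Rightarrow> nat \<Rightarrow> bool) \<Rightarrow> nat \<Rightarrow> nat \<Rightarrow> real \<Rightarrow> (nat \<Rightarrow> bool) \<Rightarrow> (nat \<Rightarrow> bool) pmf" where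
  "em_step E n k p x = Pi_pmf {1..n} False (\<lambda>u. node_update E n k p x u)"

definition init_config :: "nat \<Rightarrow> real \<Rightarrow> (nat \<Rightarrow> bool) pmf" where
  "init_config n q = Pi_pmf {1..n} False (\<lambda>_. bernoulli_pmf q)"

text \<open>Distribution of the trajectory [x_0, ..., x_T] (a list of length T+1).\<close>
fun em_traj :: "(nat \<Rightarrow> nat \<Rightarrow> nat \<Rightarrow> bool) \<Rightarrow> nat \<Rightarrow> nat \<Rightarrow> real \<Rightarrow> real \<Rightarrow> nat \<Rightarrow> (nat \<Rightarrow> bool) list pmf" where
  "em_traj E n k p q 0 = map_pmf (\<lambda>x. [x]) (init_config n q)"
| "em_traj E n k p q (Suc T) =
     bind_pmf (em_traj E n k p q T) (\<lambda>xs. map_pmf (\<lambda>y. xs @ [y]) (em_step E n k p (last xs)))"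

definition F :: "real \<Rightarrow> nat \<Rightarrow> real \<Rightarrow> real" where
  "F p k x = measure_pmf.prob (binomial_pmf k ((1 - p) * x)) {i. 2 * i \<ge> k + 1}"

definition fixpts :: "real \<Rightarrow> nat \<Rightarrow> real set" where
  "fixpts p k = {x \<in> {0..1}. F p k x = x}"

definition pstar :: "nat \<Rightarrow> real" where
  "pstar k = (THE ps. 1/9 \<le> ps \<and> ps < 1/2 \<and>
      (\<forall>p. 0 \<le> p \<and> p < ps \<longrightarrow> card (fixpts p k) = 3) \<and>
      card (fixpts ps k) = 2 \<and>
      (\<forall>p. ps < p \<and> p \<le> 1 \<longrightarrow> fixpts p k = {0}))"

definition phi_minus :: "real \<Rightarrow> nat \<Rightarrow> real" where
  "phi_minus p k = Min (fixpts p k - {0})"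

definition phi_plus :: "real \<Rightarrow> nat \<Rightarrow> real" where
  "phi_plus p k = Max (fixpts p k - {0})"

definition pstar_q :: "nat \<Rightarrow> real \<Rightarrow> real" where
  "pstar_q k q = (GREATEST p. 0 \<le> p \<and> p \<le> pstar k \<and> phi_minus p k \<le> q)"

definition mu :: "real \<Rightarrow> nat \<Rightarrow> real" where
  "mu p k = (THE x. phi_minus p k < x \<and> x < phi_plus p k \<and> deriv (F p k) x = 1)"

end

theory Submission
  imports Defs "HOL-Real_Asymp.Real_Asymp"
begin

definition tailsum :: "nat \<Rightarrow> nat \<Rightarrow> real \<Rightarrow> real" where
  "tailsum k j r = (\<Sum>i\<in>{j..k}. real (k choose i) * r^i * (1-r)^(k-i))"

lemma choose_id1: "j \<ge> 1 \<Longrightarrow> j \<le> k \<Longrightarrow> real (k choose j) * real j = real k * real ((k-1) choose (j-1))"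
proof -
  assume "j \<ge> 1" "j \<le> k"
  then obtain j' k' where "j = Suc j'" "k = Suc k'" by (metis Suc_le_D le_trans One_nat_def Suc_le_lessD less_imp_Suc_add)
  then show ?thesis using Suc_times_binomial_eq[of k' j']
    by (metis diff_Suc_1 of_nat_mult mult.commute)
qed

lemma choose_id2: "real (k choose j) * real (k - j) = real k * real ((k-1) choose j)"
  using binomial_absorb_comp[of k j] by (metis of_nat_mult mult.commute)

lemma tail_deriv_aux:
  "d < k \<Longrightarrow> (tailsum k (k-d) has_real_derivative
      real k * real ((k-1) choose (k-d-1)) * r^(k-d-1) * (1-r)^d) (at r)"
proof (induction d)
  case 0
  have eq: "tailsum k (k-0) = (\<lambda>r. r^k)"
    by (rule ext) (simp add: tailsum_def)
  show ?case unfolding eq using DERIV_pow[of k r] by simp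
next
  case (Suc d)
  define j where "j = k - Suc d"
  have j1: "j \<ge> 1" and jk: "j < k" and kd: "k - d = Suc j" and kj: "k - j = Suc d"
    using Suc.prems by (auto simp: j_def)
  have IH: "(tailsum k (Suc j) has_real_derivative
      real k * real ((k-1) choose j) * r^j * (1-r)^d) (at r)"
    using Suc.IH Suc.prems kd by (metis Suc_lessD diff_Suc_1)
  have split: "tailsum k j = (\<lambda>r. real (k choose j) * r^j * (1-r)^(Suc d) + tailsum k (Suc j) r)"
  proof
    fix r
    have "{j..k} = insert j {Suc j..k}" using jk by auto
    then show "tailsum k j r = real (k choose j) * r^j * (1-r)^(Suc d) + tailsum k (Suc j) r"
      unfolding tailsum_def using kj by simp
  qed
  have T: "((\<lambda>r. real (k choose j) * r^j * (1-r)^(Suc d)) has_real_derivative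
     real (k choose j) * (real j * r^(j-1) * (1-r)^(Suc d) - r^j * (real (Suc d) * (1-r)^d))) (at r)"
    by (rule derivative_eq_intros refl | simp)+ (simp add: algebra_simps)
  have D: "(tailsum k j has_real_derivative
     real (k choose j) * (real j * r^(j-1) * (1-r)^(Suc d) - r^j * (real (Suc d) * (1-r)^d))
     + real k * real ((k-1) choose j) * r^j * (1-r)^d) (at r)"
    unfolding split by (rule DERIV_add[OF T IH])
  have e1: "real (k choose j) * real j = real k * real ((k-1) choose (j-1))"
    using choose_id1[OF j1] jk by simp
  have e2: "real (k choose j) * real (Suc d) = real k * real ((k-1) choose j)"
    using choose_id2[of k j] kj by simp
  have "real (k choose j) * (real j * r^(j-1) * (1-r)^(Suc d) - r^j * (real (Suc d) * (1-r)^d))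
     + real k * real ((k-1) choose j) * r^j * (1-r)^d
     = (real (k choose j) * real j) * r^(j-1) * (1-r)^(Suc d) - (real (k choose j) * real (Suc d)) * r^j * (1-r)^d
     + real k * real ((k-1) choose j) * r^j * (1-r)^d"
    by (simp add: algebra_simps)
  also have "\<dots> = real k * real ((k-1) choose (j-1)) * r^(j-1) * (1-r)^(Suc d)"
    unfolding e1 e2 by simp
  finally have "real (k choose j) * (real j * r^(j-1) * (1-r)^(Suc d) - r^j * (real (Suc d) * (1-r)^d))
     + real k * real ((k-1) choose j) * r^j * (1-r)^d = real k * real ((k-1) choose (k - Suc d - 1)) * r^(k - Suc d - 1) * (1-r)^(Suc d)"
    by (simp add: j_def)
  with D show ?case by (simp add: j_def)
qed

lemma tail_deriv:
  assumes "1 \<le> j" "j \<le> k"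
  shows "(tailsum k j has_real_derivative
      real k * real ((k-1) choose (j-1)) * r^(j-1) * (1-r)^(k-j)) (at r)"
proof -
  have "k - j < k" "k - (k - j) = j" using assms by auto
  from tail_deriv_aux[OF this(1), of r] this(2) show ?thesis by simp
qed

definition Gm :: "nat \<Rightarrow> real \<Rightarrow> real" where
  "Gm m r = tailsum (2*m-1) m r"

definition cD :: "nat \<Rightarrow> real" where
  "cD m = real (2*m-1) * real ((2*m-2) choose (m-1))"

definition Dm :: "nat \<Rightarrow> real \<Rightarrow> real" where
  "Dm m r = cD m * (r*(1-r))^(m-1)"

lemma cD_pos: "m \<ge> 1 \<Longrightarrow> cD m > 0"
  by (simp add: cD_def)

lemma Gm_deriv: assumes "m \<ge> 1" shows "(Gm m has_real_derivative Dm m r) (at r)"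
proof -
  have "(tailsum (2*m-1) m has_real_derivative
      real (2*m-1) * real ((2*m-1-1) choose (m-1)) * r^(m-1) * (1-r)^(2*m-1-m)) (at r)"
    by (rule tail_deriv) (use assms in auto)
  moreover have "2*m-1-1 = 2*m-2" "2*m-1-m = m-1" using assms by auto
  ultimately show ?thesis
    unfolding Gm_def[abs_def] Dm_def cD_def by (simp add: power_mult_distrib mult.assoc)
qed

lemma Gm_deriv_comp[derivative_intros]:
  assumes "m \<ge> 1" "(f has_real_derivative f') (at x)"
  shows "((\<lambda>x. Gm m (f x)) has_real_derivative Dm m (f x) * f') (at x)"
  using DERIV_chain2[OF Gm_deriv[OF assms(1)] assms(2)] .

lemma Gm_cont: "m \<ge> 1 \<Longrightarrow> isCont (Gm m) r"
  using Gm_deriv DERIV_isCont by blast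

lemma Gm_continuous_on: "m \<ge> 1 \<Longrightarrow> continuous_on S (Gm m)"
  using Gm_cont continuous_at_imp_continuous_on by blast

lemma Gm_nonneg: "0 \<le> r \<Longrightarrow> r \<le> 1 \<Longrightarrow> Gm m r \<ge> 0"
  unfolding Gm_def tailsum_def by (intro sum_nonneg) auto

lemma Gm_0: "m \<ge> 1 \<Longrightarrow> Gm m 0 = 0"
  unfolding Gm_def tailsum_def by (intro sum.neutral) auto

lemma Gm_1: "m \<ge> 1 \<Longrightarrow> Gm m 1 = 1"
proof -
  assume m: "m \<ge> 1"
  have "Gm m 1 = (\<Sum>i\<in>{m..2*m-1}. if i = 2*m-1 then 1 else 0)"
    unfolding Gm_def tailsum_def by (intro sum.cong) auto
  also have "\<dots> = 1" using m by (subst sum.delta) auto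
  finally show ?thesis .
qed

definition lowsum :: "nat \<Rightarrow> real \<Rightarrow> real" where
  "lowsum m r = (\<Sum>i<m. real ((2*m-1) choose i) * r^i * (1-r)^(2*m-1-i))"

lemma Gm_lowsum: assumes "m \<ge> 1" shows "Gm m r + lowsum m r = 1"
proof -
  have "1 = (r + (1-r))^(2*m-1)" by simp
  also have "\<dots> = (\<Sum>i\<le>2*m-1. real ((2*m-1) choose i) * r^i * (1-r)^(2*m-1-i))"
    by (rule binomial_ring)
  also have "{..2*m-1} = {..<m} \<union> {m..2*m-1}" using assms by auto
  also have "(\<Sum>i\<in>{..<m} \<union> {m..2*m-1}. real ((2*m-1) choose i) * r^i * (1-r)^(2*m-1-i))
     = lowsum m r + Gm m r"
    unfolding lowsum_def Gm_def tailsum_def by (subst sum.union_disjoint) auto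
  finally show ?thesis by simp
qed

lemma lowsum_ge: assumes "m \<ge> 1" "0 \<le> r" "r \<le> 1" shows "lowsum m r \<ge> (1-r)^(2*m-1)"
proof -
  have "(\<lambda>i. real ((2*m-1) choose i) * r^i * (1-r)^(2*m-1-i)) 0 \<le> lowsum m r"
    unfolding lowsum_def by (rule member_le_sum) (use assms in auto)
  then show ?thesis by simp
qed

lemma Gm_le: assumes "m \<ge> 1" "0 \<le> r" "r \<le> 1" shows "Gm m r \<le> 1 - (1-r)^(2*m-1)"
  using Gm_lowsum[OF assms(1), of r] lowsum_ge[OF assms] by linarith

lemma Gm_le1: assumes "m \<ge> 1" "0 \<le> r" "r \<le> 1" shows "Gm m r \<le> 1"
proof -
  have "(1-r)^(2*m-1) \<ge> 0" using assms by simp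
  then show ?thesis using Gm_le[OF assms] by linarith
qed

lemma Gm_lt1: assumes "m \<ge> 1" "0 \<le> r" "r < 1" shows "Gm m r < 1"
proof -
  have "(1-r)^(2*m-1) > 0" using assms by simp
  then show ?thesis using Gm_le[of m r] assms by linarith
qed

lemma binom_sym': "j \<le> n \<Longrightarrow> n choose (n - j) = n choose j"
  by (metis binomial_symmetric diff_diff_cancel)

lemma sum_sym_aux:
  assumes "k = 2*m-1" "m \<ge> 1"
  shows "(\<Sum>i\<in>{m..k}. real (k choose i) * (1-r)^i * r^(k-i)) = (\<Sum>j<m. real (k choose j) * r^j * (1-r)^(k-j))"
proof -
  have bs: "k choose (k-j) = k choose j" if "j \<le> k" for j using that by (intro binom_sym')
  show ?thesis
    apply (rule sum.reindex_bij_witness[of _ "\<lambda>j. k-j" "\<lambda>i. k-i"])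
    using assms apply auto[4]
    apply (subst bs) using assms apply auto[1]
    by (auto simp: diff_diff_cancel algebra_simps)
qed

lemma Gm_sym: assumes "m \<ge> 1" shows "Gm m (1-r) = lowsum m r"
  unfolding Gm_def tailsum_def lowsum_def using sum_sym_aux[where k="2*m-1" and m=m and r=r] assms by simp

lemma Gm_half: assumes "m \<ge> 1" shows "Gm m (1/2) = 1/2"
proof -
  have "Gm m (1 - 1/2) = lowsum m (1/2)" by (rule Gm_sym[OF assms])
  then have "Gm m (1/2) = lowsum m (1/2)" by simp
  with Gm_lowsum[OF assms, of "1/2"] show ?thesis by simp
qed

definition DDm :: "nat \<Rightarrow> real \<Rightarrow> real" where
  "DDm m r = cD m * (real (m-1) * (r * (1-r))^(m-2) * (1 - 2*r))"

lemma Dm_deriv: assumes "m \<ge> 2" shows "(Dm m has_real_derivative DDm m r) (at r)"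
proof -
  have "((\<lambda>r. cD m * (r * (1-r))^(m-1)) has_real_derivative
         cD m * (real (m-1) * (r * (1-r))^(m-1-1) * (1 - 2*r))) (at r)"
    by (rule derivative_eq_intros refl | simp)+
  moreover have "m - 1 - 1 = m - 2" by simp
  ultimately show ?thesis unfolding Dm_def[abs_def] DDm_def by simp
qed

lemma Dm_cont: "m \<ge> 2 \<Longrightarrow> isCont (Dm m) r"
  using Dm_deriv DERIV_isCont by blast

lemma Dm_nonneg: "m \<ge> 1 \<Longrightarrow> 0 \<le> r \<Longrightarrow> r \<le> 1 \<Longrightarrow> Dm m r \<ge> 0"
  unfolding Dm_def using cD_pos[of m] by (intro mult_nonneg_nonneg) (auto intro!: zero_le_power)

lemma Dm_pos: "m \<ge> 1 \<Longrightarrow> 0 < r \<Longrightarrow> r < 1 \<Longrightarrow> Dm m r > 0"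
  unfolding Dm_def using cD_pos[of m] by (intro mult_pos_pos) (auto intro!: zero_less_power)

lemma Dm_1: "m \<ge> 2 \<Longrightarrow> Dm m 1 = 0"
  unfolding Dm_def by simp

lemma sfun_inc: fixes u v :: real shows "0 \<le> u \<Longrightarrow> u < v \<Longrightarrow> v \<le> 1/2 \<Longrightarrow> u * (1-u) < v * (1-v)"
proof -
  assume "0 \<le> u" "u < v" "v \<le> 1/2"
  then have "(v-u) * (1-u-v) > 0" by (intro mult_pos_pos) auto
  moreover have "v * (1-v) - u * (1-u) = (v-u) * (1-u-v)" by (simp add: algebra_simps)
  ultimately show ?thesis by linarith
qed

lemma sfun_dec: fixes v w :: real shows "1/2 \<le> v \<Longrightarrow> v < w \<Longrightarrow> w * (1-w) < v * (1-v)"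
proof -
  assume "1/2 \<le> v" "v < w"
  then have "(w-v) * (v+w-1) > 0" by (intro mult_pos_pos) auto
  moreover have "v * (1-v) - w * (1-w) = (w-v) * (v+w-1)" by (simp add: algebra_simps)
  ultimately show ?thesis by linarith
qed

lemma Dm_inc: assumes "m \<ge> 2" "0 \<le> u" "u < v" "v \<le> 1/2" shows "Dm m u < Dm m v"
proof -
  have "(u * (1-u))^(m-1) < (v * (1-v))^(m-1)"
    using sfun_inc[OF assms(2-4)] assms by (intro power_strict_mono) auto
  then show ?thesis unfolding Dm_def using cD_pos[of m] assms by simp
qed

lemma Dm_dec: assumes "m \<ge> 2" "1/2 \<le> v" "v < w" "w \<le> 1" shows "Dm m w < Dm m v"
proof -
  have "(w * (1-w))^(m-1) < (v * (1-v))^(m-1)"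
    using sfun_dec[OF assms(2-3)] assms by (intro power_strict_mono) auto
  then show ?thesis unfolding Dm_def using cD_pos[of m] assms by simp
qed

lemma Dm_unimodal: assumes "m \<ge> 2" "0 \<le> u" "u < v" "v < w" "w \<le> 1"
  shows "Dm m v > min (Dm m u) (Dm m w)"
proof (cases "v \<le> 1/2")
  case True
  then show ?thesis using Dm_inc[OF assms(1,2,3) True] by simp
next
  case False
  then show ?thesis using Dm_dec[OF assms(1) _ assms(4,5)] by simp
qed

definition gfun :: "nat \<Rightarrow> real \<Rightarrow> real" where
  "gfun m r = r * Dm m r - Gm m r"

lemma gfun_deriv: assumes "m \<ge> 2" shows "(gfun m has_real_derivative r * DDm m r) (at r)"
proof -
  have d1: "((\<lambda>r. r * Dm m r) has_real_derivative 1 * Dm m r + DDm m r * r) (at r)"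
    by (rule DERIV_mult[OF DERIV_ident Dm_deriv[OF assms]])
  have "((\<lambda>r. r * Dm m r - Gm m r) has_real_derivative (1 * Dm m r + DDm m r * r) - Dm m r) (at r)"
    by (rule DERIV_diff[OF d1 Gm_deriv]) (use assms in auto)
  then show ?thesis unfolding gfun_def[abs_def] by (simp add: algebra_simps)
qed

lemma gfun_cont: "m \<ge> 2 \<Longrightarrow> continuous_on S (gfun m)"
  using gfun_deriv DERIV_isCont continuous_at_imp_continuous_on by blast

lemma gfun_0: "m \<ge> 2 \<Longrightarrow> gfun m 0 = 0"
  unfolding gfun_def using Gm_0[of m] by simp

lemma gfun_1: "m \<ge> 2 \<Longrightarrow> gfun m 1 = -1"
  unfolding gfun_def using Gm_1[of m] Dm_1[of m] by simp

lemma gfun_inc: assumes "m \<ge> 2" "0 \<le> x" "x < y" "y \<le> 1/2" shows "gfun m x < gfun m y"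
proof (rule DERIV_pos_imp_increasing_open[OF assms(3)])
  fix z assume z: "x < z" "z < y"
  have "DDm m z > 0" unfolding DDm_def using cD_pos[of m] assms z
    by (intro mult_pos_pos) (auto intro!: zero_less_power)
  then show "\<exists>d. (gfun m has_real_derivative d) (at z) \<and> 0 < d"
    using gfun_deriv[OF assms(1), of z] z assms by (intro exI[of _ "z * DDm m z"]) auto
qed (rule gfun_cont[OF assms(1)])

lemma gfun_dec: assumes "m \<ge> 2" "1/2 \<le> x" "x < y" "y \<le> 1" shows "gfun m y < gfun m x"
proof -
  have "(\<lambda>r. - gfun m r) x < (\<lambda>r. - gfun m r) y"
  proof (rule DERIV_pos_imp_increasing_open[OF assms(3)])
    fix z assume z: "x < z" "z < y"
    have "DDm m z < 0" unfolding DDm_def using cD_pos[of m] assms z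
      by (intro mult_pos_neg) (auto intro!: mult_pos_neg zero_less_power)
    then show "\<exists>d. ((\<lambda>r. - gfun m r) has_real_derivative d) (at z) \<and> 0 < d"
      using DERIV_minus[OF gfun_deriv[OF assms(1), of z]] z assms
      by (intro exI[of _ "- (z * DDm m z)"]) (auto simp: mult_pos_neg)
  next
    show "continuous_on {x..y} (\<lambda>r. - gfun m r)"
      using gfun_cont[OF assms(1)] by (intro continuous_intros)
  qed
  then show ?thesis by simp
qed

lemma gfun_pos_small: assumes "m \<ge> 2" "0 < x" "x \<le> 1/2" shows "gfun m x > 0"
  using gfun_inc[OF assms(1) _ assms(2,3)] gfun_0[OF assms(1)] by simp

lemma rstar_ex: assumes "m \<ge> 2" shows "\<exists>r. 1/2 < r \<and> r < 1 \<and> gfun m r = 0"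
proof -
  have ic: "\<forall>x. isCont (gfun m) x" using gfun_deriv[OF assms] DERIV_isCont by blast
  have "\<exists>x\<ge>1/2. x \<le> 1 \<and> gfun m x = 0"
    using ic by (intro IVT2) (use assms gfun_1 gfun_pos_small[OF assms, of "1/2"] gfun_deriv[OF assms] DERIV_isCont in auto)
  then obtain x where x: "1/2 \<le> x" "x \<le> 1" "gfun m x = 0" by blast
  have "x \<noteq> 1/2"
  proof
    assume h: "x = 1/2"
    have "gfun m (1/2) = 0" using x(3) h by blast
    then show False using gfun_pos_small[OF assms, of "1/2"] by simp
  qed
  moreover have "x \<noteq> 1" using x gfun_1[OF assms] by auto
  ultimately show ?thesis using x by (intro exI[of _ x]) auto
qed

definition rstar :: "nat \<Rightarrow> real" where
  "rstar m = (SOME r. 1/2 < r \<and> r < 1 \<and> gfun m r = 0)"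

lemma rstar: assumes "m \<ge> 2" shows "1/2 < rstar m" "rstar m < 1" "gfun m (rstar m) = 0"
  using someI_ex[OF rstar_ex[OF assms]] unfolding rstar_def by auto

lemma gfun_pos: assumes "m \<ge> 2" "0 < x" "x < rstar m" shows "gfun m x > 0"
proof (cases "x \<le> 1/2")
  case True then show ?thesis using gfun_pos_small assms by auto
next
  case False
  then show ?thesis using gfun_dec[OF assms(1), of x "rstar m"] rstar[OF assms(1)] assms by auto
qed

lemma gfun_neg: assumes "m \<ge> 2" "rstar m < x" "x \<le> 1" shows "gfun m x < 0"
  using gfun_dec[OF assms(1), of "rstar m" x] rstar[OF assms(1)] assms by auto

definition hfun :: "nat \<Rightarrow> real \<Rightarrow> real" where
  "hfun m r = Gm m r / r"

lemma hfun_deriv: assumes "m \<ge> 2" "r \<noteq> 0" shows "(hfun m has_real_derivative gfun m r / r^2) (at r)"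
proof -
  have "((\<lambda>r. Gm m r / r) has_real_derivative (Dm m r * r - Gm m r * 1) / (r * r)) (at r)"
    by (intro DERIV_divide Gm_deriv DERIV_ident) (use assms in auto)
  then show ?thesis unfolding hfun_def[abs_def] gfun_def by (simp add: power2_eq_square algebra_simps)
qed

lemma hfun_cont: assumes "m \<ge> 2" "0 < a" shows "continuous_on {a..b} (hfun m)"
  using hfun_deriv[OF assms(1)] assms(2) DERIV_isCont continuous_at_imp_continuous_on
  by (smt (verit) atLeastAtMost_iff)

lemma hfun_inc: assumes "m \<ge> 2" "0 < x" "x < y" "y \<le> rstar m" shows "hfun m x < hfun m y"
proof (rule DERIV_pos_imp_increasing_open[OF assms(3)])
  fix z assume z: "x < z" "z < y"
  have "gfun m z > 0" using gfun_pos[OF assms(1), of z] assms z by auto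
  then show "\<exists>d. (hfun m has_real_derivative d) (at z) \<and> 0 < d"
    using hfun_deriv[OF assms(1), of z] z assms by (intro exI[of _ "gfun m z / z^2"]) auto
qed (rule hfun_cont[OF assms(1,2)])

lemma hfun_dec: assumes "m \<ge> 2" "rstar m \<le> x" "x < y" "y \<le> 1" shows "hfun m y < hfun m x"
proof -
  have x0: "x > 0" using rstar[OF assms(1)] assms by auto
  have "(\<lambda>r. - hfun m r) x < (\<lambda>r. - hfun m r) y"
  proof (rule DERIV_pos_imp_increasing_open[OF assms(3)])
    fix z assume z: "x < z" "z < y"
    have "gfun m z < 0" using gfun_neg[OF assms(1), of z] assms z by auto
    then show "\<exists>d. ((\<lambda>r. - hfun m r) has_real_derivative d) (at z) \<and> 0 < d"
      using DERIV_minus[OF hfun_deriv[OF assms(1), of z]] z x0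
      by (intro exI[of _ "- (gfun m z / z^2)"]) (auto simp: divide_neg_pos)
  next
    show "continuous_on {x..y} (\<lambda>r. - hfun m r)"
      using hfun_cont[OF assms(1) x0] by (intro continuous_intros)
  qed
  then show ?thesis by simp
qed

definition Mm :: "nat \<Rightarrow> real" where
  "Mm m = hfun m (rstar m)"

lemma hfun_le_M: assumes "m \<ge> 2" "0 < r" "r \<le> 1" shows "hfun m r \<le> Mm m"
  and "r \<noteq> rstar m \<Longrightarrow> hfun m r < Mm m"
proof -
  show "r \<noteq> rstar m \<Longrightarrow> hfun m r < Mm m"
  proof -
    assume "r \<noteq> rstar m"
    then consider "r < rstar m" | "rstar m < r" by linarith
    then show ?thesis
    proof cases
      case 1 then show ?thesis unfolding Mm_def using hfun_inc[OF assms(1,2) 1] by simp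
    next
      case 2 then show ?thesis unfolding Mm_def using hfun_dec[OF assms(1) _ 2 assms(3)] by simp
    qed
  qed
  then show "hfun m r \<le> Mm m" unfolding Mm_def by (cases "r = rstar m") auto
qed

lemma hfun_1: "m \<ge> 2 \<Longrightarrow> hfun m 1 = 1"
  unfolding hfun_def using Gm_1[of m] by simp

lemma hfun_half: "m \<ge> 2 \<Longrightarrow> hfun m (1/2) = 1"
  unfolding hfun_def using Gm_half[of m] by simp

lemma M_gt1: assumes "m \<ge> 2" shows "Mm m > 1"
  using hfun_le_M(2)[OF assms, of 1] hfun_1[OF assms] rstar[OF assms] by auto

lemma M_lt2: assumes "m \<ge> 2" shows "Mm m < 2"
proof -
  have "Gm m (rstar m) < 1" using Gm_lt1[of m "rstar m"] rstar[OF assms] assms by auto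
  moreover have "Gm m (rstar m) \<ge> 0" using Gm_nonneg[of "rstar m" m] rstar[OF assms] by auto
  ultimately have "Gm m (rstar m) / rstar m < 1 / (1/2)"
    using rstar[OF assms] by (intro frac_less) auto
  then show ?thesis unfolding Mm_def hfun_def by simp
qed

lemma rstar_M: assumes "m \<ge> 2" shows "rstar m * Mm m \<le> 1"
  unfolding Mm_def hfun_def using rstar[OF assms] Gm_le1[of m "rstar m"] assms by auto

lemma cD_eq1: assumes "m \<ge> 1" shows "cD m = real m * real ((2*m-1) choose m)"
proof -
  have "Suc (2*m-2) * ((2*m-2) choose (m-1)) = (Suc (2*m-2) choose Suc (m-1)) * Suc (m-1)"
    by (rule Suc_times_binomial_eq)
  moreover have "Suc (2*m-2) = 2*m-1" "Suc (m-1) = m" using assms by auto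
  ultimately have "(2*m-1) * ((2*m-2) choose (m-1)) = ((2*m-1) choose m) * m" by simp
  then have "real (2*m-1) * real ((2*m-2) choose (m-1)) = real ((2*m-1) choose m) * real m"
    by (metis of_nat_mult)
  then show ?thesis unfolding cD_def by simp
qed

lemma cD_eq2: assumes "m \<ge> 1" shows "cD (Suc m) = (4*real m + 2) * real ((2*m-1) choose m)"
proof -
  have "2*m = Suc (2*m-1)" "m = Suc (m-1)" using assms by auto
  then have "(2*m) choose m = ((2*m-1) choose (m-1)) + ((2*m-1) choose m)"
    by (metis binomial_Suc_Suc)
  moreover have "(2*m-1) choose (m-1) = (2*m-1) choose m"
  proof -
    have "(2*m-1) choose (m-1) = (2*m-1) choose ((2*m-1) - (m-1))"
      by (rule binomial_symmetric) (use assms in auto)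
    moreover have "(2*m-1) - (m-1) = m" using assms by auto
    ultimately show ?thesis by simp
  qed
  ultimately have "(2*m) choose m = 2 * ((2*m-1) choose m)" by simp
  then have "real ((2*m) choose m) = 2 * real ((2*m-1) choose m)" by simp
  moreover have "cD (Suc m) = real (2*m+1) * real ((2*m) choose m)" unfolding cD_def by simp
  ultimately show ?thesis by (simp add: algebra_simps)
qed

lemma Gm_step: assumes "m \<ge> 1"
  shows "Gm (Suc m) r - Gm m r = real ((2*m-1) choose m) * (r * (1-r))^m * (2*r - 1)"
proof -
  define C where "C = real ((2*m-1) choose m)"
  define \<Delta> where "\<Delta> = (\<lambda>r. Gm (Suc m) r - Gm m r - C * (r * (1-r))^m * (2*r - 1))"
  have d: "(\<Delta> has_real_derivative 0) (at x)" for x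
  proof -
    define s where "s = x * (1-x)"
    have R: "((\<lambda>r. C * (r * (1-r))^m * (2*r - 1)) has_real_derivative
       C * (real m * (x * (1-x))^(m-1) * (1 - 2*x)) * (2*x-1) + C * (x * (1-x))^m * 2) (at x)"
      by (rule derivative_eq_intros refl | simp)+
    have D: "(\<Delta> has_real_derivative Dm (Suc m) x - Dm m x -
       (C * (real m * (x * (1-x))^(m-1) * (1 - 2*x)) * (2*x-1) + C * (x * (1-x))^m * 2)) (at x)"
      unfolding \<Delta>_def by (intro DERIV_diff Gm_deriv R) (use assms in auto)
    have sm: "(x * (1-x))^m = s * s^(m-1)" unfolding s_def using assms
      by (metis Suc_diff_le diff_Suc_1 power_Suc)
    have sq: "(1 - 2*x) * (2*x - 1) = 4 * s - 1" unfolding s_def by (simp add: algebra_simps power2_eq_square)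
    have "Dm (Suc m) x - Dm m x -
       (C * (real m * (x * (1-x))^(m-1) * (1 - 2*x)) * (2*x-1) + C * (x * (1-x))^m * 2)
      = (4*real m + 2) * C * (s * s^(m-1)) - real m * C * s^(m-1)
        - (C * real m * s^(m-1) * ((1 - 2*x) * (2*x-1)) + C * (s * s^(m-1)) * 2)"
      unfolding Dm_def cD_eq1[OF assms] cD_eq2[OF assms] C_def[symmetric] sm[symmetric]
      by (simp add: s_def algebra_simps)
    also have "\<dots> = 0" unfolding sq by (simp add: algebra_simps)
    finally show ?thesis using D by simp
  qed
  have "\<Delta> r = \<Delta> 0" by (rule DERIV_isconst_all) (use d in blast)
  also have "\<Delta> 0 = 0" unfolding \<Delta>_def using Gm_0[of m] Gm_0[of "Suc m"] assms by simp
  finally show ?thesis unfolding \<Delta>_def C_def by simp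
qed

lemma Gm_1_eq: "Gm (Suc 0) r = r"
  unfolding Gm_def tailsum_def by simp

lemma Gm_34: assumes "m \<ge> 2" shows "Gm m (3/4) \<ge> 27/32"
  using assms
proof (induction m rule: dec_induct)
  case base
  have "Gm (Suc 1) (3/4) - Gm 1 (3/4) = real ((2*1-1) choose 1) * (3/4 * (1-3/4))^1 * (2*(3/4) - 1)"
    by (rule Gm_step) simp
  then show ?case by (simp add: Gm_1_eq numeral_2_eq_2)
next
  case (step n)
  have "Gm (Suc n) (3/4) - Gm n (3/4) = real ((2*n-1) choose n) * (3/4 * (1-3/4))^n * (2*(3/4) - 1)"
    by (rule Gm_step) (use step in auto)
  moreover have "real ((2*n-1) choose n) * (3/4 * (1-3/4))^n * (2*(3/4) - 1) \<ge> (0::real)"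
    by simp
  ultimately show ?case using step by linarith
qed

lemma M_ge: assumes "m \<ge> 2" shows "Mm m \<ge> 9/8"
proof -
  have "hfun m (3/4) \<le> Mm m" by (rule hfun_le_M) (use assms in auto)
  moreover have "hfun m (3/4) \<ge> 9/8" unfolding hfun_def using Gm_34[OF assms] by simp
  ultimately show ?thesis by linarith
qed

lemma F_eq:
  assumes m: "m \<ge> 1" and k: "k = 2*m-1" and r: "0 \<le> (1-p)*x" "(1-p)*x \<le> 1"
  shows "F p k x = Gm m ((1-p)*x)"
proof -
  define r where "r = (1-p)*x"
  have r01: "r \<in> {0..1}" using r unfolding r_def by auto
  let ?M = "binomial_pmf k r"
  have sub: "set_pmf ?M \<subseteq> {..k}" using r01 by (auto simp: set_pmf_binomial_eq split: if_splits)
  have "F p k x = measure_pmf.prob ?M {i. 2*i \<ge> k+1}" unfolding F_def r_def ..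
  also have "\<dots> = measure_pmf.prob ?M ({i. 2*i \<ge> k+1} \<inter> set_pmf ?M)"
    by (simp add: measure_Int_set_pmf)
  also have "{i. 2*i \<ge> k+1} \<inter> set_pmf ?M = {m..k} \<inter> set_pmf ?M"
    using sub k m by auto
  also have "measure_pmf.prob ?M \<dots> = measure_pmf.prob ?M {m..k}"
    by (simp add: measure_Int_set_pmf)
  also have "\<dots> = (\<Sum>i\<in>{m..k}. pmf ?M i)" by (simp add: measure_measure_pmf_finite)
  also have "\<dots> = Gm m r" unfolding Gm_def tailsum_def k using r01 by simp
  finally show ?thesis unfolding r_def .
qed

lemma F_eq':
  assumes m: "m \<ge> 1" and k: "k = 2*m-1" and p: "0 \<le> p" "p \<le> 1" and x: "0 \<le> x" "x \<le> 1"
  shows "F p k x = Gm m ((1-p)*x)"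
  by (rule F_eq[OF m k]) (use p x in \<open>auto intro: mult_le_one\<close>)

lemma hfun_lt1: assumes "m \<ge> 2" "0 < r" "r < 1/2" shows "hfun m r < 1"
  using hfun_inc[OF assms(1,2,3)] hfun_half[OF assms(1)] rstar[OF assms(1)] by auto

lemma fix_char:
  assumes m: "m \<ge> 2" and k: "k = 2*m-1" and p: "0 \<le> p" "p < 1"
  shows "x \<in> fixpts p k \<longleftrightarrow> x = 0 \<or> (\<exists>r. 0 < r \<and> r \<le> 1-p \<and> hfun m r = 1/(1-p) \<and> x = r/(1-p))"
proof -
  define a where "a = 1 - p"
  have a: "0 < a" "a \<le> 1" using p unfolding a_def by auto
  have m1: "m \<ge> 1" using m by auto
  show ?thesis
  proof
    assume x: "x \<in> fixpts p k"
    then have x01: "0 \<le> x" "x \<le> 1" and fx: "F p k x = x" unfolding fixpts_def by auto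
    have G: "Gm m (a*x) = x" using fx F_eq'[OF m1 k p(1) _ x01] p unfolding a_def by auto
    show "x = 0 \<or> (\<exists>r. 0 < r \<and> r \<le> 1-p \<and> hfun m r = 1/(1-p) \<and> x = r/(1-p))"
    proof (cases "x = 0")
      case False
      then have "x > 0" using x01 by auto
      moreover have "hfun m (a*x) = 1/a" unfolding hfun_def G using \<open>x > 0\<close> a by simp
      ultimately show ?thesis using a x01 unfolding a_def[symmetric]
        by (intro disjI2 exI[of _ "a*x"]) (auto intro: mult_left_le)
    qed simp
  next
    assume "x = 0 \<or> (\<exists>r. 0 < r \<and> r \<le> 1-p \<and> hfun m r = 1/(1-p) \<and> x = r/(1-p))"
    then show "x \<in> fixpts p k"
    proof
      assume "x = 0"
      then show ?thesis unfolding fixpts_def using F_eq'[OF m1 k p(1), of 0] p Gm_0[OF m1] by auto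
    next
      assume "\<exists>r. 0 < r \<and> r \<le> 1-p \<and> hfun m r = 1/(1-p) \<and> x = r/(1-p)"
      then obtain r where r: "0 < r" "r \<le> a" "hfun m r = 1/a" "x = r/a" unfolding a_def[symmetric] by blast
      have x01: "0 \<le> x" "x \<le> 1" using r a by auto
      have ax: "a*x = r" using r a by simp
      have "Gm m r = r / a" using r(3) r(1) unfolding hfun_def by (simp add: field_simps)
      then have "F p k x = x" using F_eq'[OF m1 k p(1) _ x01] p ax r unfolding a_def by auto
      then show ?thesis unfolding fixpts_def using x01 by auto
    qed
  qed
qed

lemma fix_ge_half:
  assumes m: "m \<ge> 2" and k: "k = 2*m-1" and p: "0 \<le> p" "p < 1" and x: "x \<in> fixpts p k" "x \<noteq> 0"
  shows "x \<ge> 1/2"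
proof -
  obtain r where r: "0 < r" "r \<le> 1-p" "hfun m r = 1/(1-p)" "x = r/(1-p)"
    using x fix_char[OF m k p] by blast
  have "1/(1-p) \<ge> 1" using p by simp
  then have "r \<ge> 1/2" using hfun_lt1[OF m r(1)] r(3) by (cases "r < 1/2") auto
  moreover have "r/(1-p) \<ge> r" using p r(1) by (simp add: field_simps mult_left_le)
  ultimately show ?thesis using r(4) by linarith
qed

lemma fix_p1: assumes m: "m \<ge> 2" and k: "k = 2*m-1" shows "fixpts 1 k = {0}"
proof -
  have "F 1 k x = 0" for x using F_eq[of m k 1 x] m k Gm_0[of m] by simp
  then show ?thesis unfolding fixpts_def by auto
qed

definition pst :: "nat \<Rightarrow> real" where "pst m = 1 - 1 / Mm m"

lemma pst_bounds: assumes "m \<ge> 2" shows "1/9 \<le> pst m" "pst m < 1/2"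
proof -
  have M: "9/8 \<le> Mm m" "Mm m < 2" using M_ge[OF assms] M_lt2[OF assms] by auto
  then have "1 / Mm m \<le> 8/9" by (simp add: field_simps)
  then show "1/9 \<le> pst m" unfolding pst_def by simp
  have "1 / Mm m > 1/2" using M by (simp add: field_simps)
  then show "pst m < 1/2" unfolding pst_def by simp
qed

lemma roots_lt_M:
  assumes m: "m \<ge> 2" and y: "1 \<le> y" "y < Mm m"
  shows "\<exists>r1 r2. 1/2 \<le> r1 \<and> r1 < rstar m \<and> rstar m < r2 \<and> r2 \<le> 1 \<and>
     {r. 0 < r \<and> r \<le> 1 \<and> hfun m r = y} = {r1, r2}"
proof -
  note rs = rstar[OF m]
  have c1: "\<forall>x. 1/2 \<le> x \<and> x \<le> rstar m \<longrightarrow> isCont (hfun m) x"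
    using hfun_deriv[OF m] DERIV_isCont by (metis less_le_trans not_le half_gt_zero_iff zero_less_one less_numeral_extra(3))
  have "\<exists>x\<ge>1/2. x \<le> rstar m \<and> hfun m x = y"
    by (rule IVT) (use c1 hfun_half[OF m] y rs in \<open>auto simp: Mm_def\<close>)
  then obtain r1 where r1: "1/2 \<le> r1" "r1 \<le> rstar m" "hfun m r1 = y" by blast
  have "r1 \<noteq> rstar m" using r1 y unfolding Mm_def by auto
  with r1 have r1': "r1 < rstar m" by auto
  have c2: "\<forall>x. rstar m \<le> x \<and> x \<le> 1 \<longrightarrow> isCont (hfun m) x"
    using hfun_deriv[OF m] DERIV_isCont rs by (metis less_le_trans not_le half_gt_zero_iff zero_less_one less_numeral_extra(3) order.strict_trans)
  have "\<exists>x\<ge>rstar m. x \<le> 1 \<and> hfun m x = y"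
    by (rule IVT2) (use c2 hfun_1[OF m] y rs in \<open>auto simp: Mm_def\<close>)
  then obtain r2 where r2: "rstar m \<le> r2" "r2 \<le> 1" "hfun m r2 = y" by blast
  have "r2 \<noteq> rstar m" using r2 y unfolding Mm_def by auto
  with r2 have r2': "rstar m < r2" by auto
  have "{r. 0 < r \<and> r \<le> 1 \<and> hfun m r = y} = {r1, r2}"
  proof (intro equalityI subsetI)
    fix r assume "r \<in> {r. 0 < r \<and> r \<le> 1 \<and> hfun m r = y}"
    then have r: "0 < r" "r \<le> 1" "hfun m r = y" by auto
    consider "r < r1" | "r = r1" | "r1 < r \<and> r \<le> rstar m" | "rstar m < r \<and> r < r2" | "r = r2" | "r2 < r" by linarith
    then show "r \<in> {r1, r2}"
    proof cases
      case 1 then show ?thesis using hfun_inc[OF m r(1) 1] r1 r1' r by auto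
    next
      case 3 then show ?thesis using hfun_inc[OF m _ _, of r1 r] r1 r1' r by auto
    next
      case 4 then show ?thesis using hfun_dec[OF m _ _, of r r2] r2 r by auto
    next
      case 6 then show ?thesis using hfun_dec[OF m _ 6 r(2)] r2 r2' r by auto
    qed auto
  next
    fix r assume "r \<in> {r1, r2}"
    then show "r \<in> {r. 0 < r \<and> r \<le> 1 \<and> hfun m r = y}" using r1 r2 r1' r2' rs by auto
  qed
  then show ?thesis using r1 r1' r2 r2' by blast
qed

lemma rstar_le_invM: assumes "m \<ge> 2" shows "rstar m \<le> 1 / Mm m"
  using rstar_M[OF assms] M_gt1[OF assms] by (simp add: field_simps)

lemma fix_lt:
  assumes m: "m \<ge> 2" and k: "k = 2*m-1" and p: "0 \<le> p" "p < pst m"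
  shows "\<exists>x1 x2. 1/2 \<le> x1 \<and> x1 < x2 \<and> x2 \<le> 1 \<and> fixpts p k = {0, x1, x2}"
proof -
  define a where "a = 1 - p"
  have M1: "Mm m > 1" using M_gt1[OF m] .
  have p1: "p < 1" using p pst_bounds[OF m] by auto
  have a: "0 < a" "a \<le> 1" "a > 1 / Mm m" using p p1 unfolding a_def pst_def by auto
  have y: "1 \<le> 1/a" "1/a < Mm m" using a M1 by (auto simp: field_simps)
  obtain r1 r2 where rr: "1/2 \<le> r1" "r1 < rstar m" "rstar m < r2" "r2 \<le> 1"
    and S: "{r. 0 < r \<and> r \<le> 1 \<and> hfun m r = 1/a} = {r1, r2}"
    using roots_lt_M[OF m y] by blast
  have "r1 \<in> {r1, r2}" "r2 \<in> {r1, r2}" by simp_all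
  then have "r1 \<in> {r. 0 < r \<and> r \<le> 1 \<and> hfun m r = 1/a}" "r2 \<in> {r. 0 < r \<and> r \<le> 1 \<and> hfun m r = 1/a}"
    unfolding S by simp_all
  then have h1: "hfun m r1 = 1/a" and h2: "hfun m r2 = 1/a" by simp_all
  have r1a: "r1 \<le> a" using rr rstar_le_invM[OF m] a by linarith
  have r2a: "r2 \<le> a"
  proof (rule ccontr)
    assume "\<not> r2 \<le> a"
    then have "a < r2" by simp
    moreover have "rstar m \<le> a" using rstar_le_invM[OF m] a by linarith
    ultimately have "hfun m r2 < hfun m a" using hfun_dec[OF m _ _ rr(4)] by blast
    moreover have "hfun m a \<le> 1/a" unfolding hfun_def using Gm_le1[of m a] a m
      by (intro divide_right_mono) auto
    ultimately show False using h2 by simp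
  qed
  have FC: "\<And>x. x \<in> fixpts p k \<longleftrightarrow> x = 0 \<or> (\<exists>r. 0 < r \<and> r \<le> a \<and> hfun m r = 1/a \<and> x = r/a)"
    using fix_char[OF m k p(1) p1] unfolding a_def .
  have "fixpts p k = {0, r1/a, r2/a}"
  proof (intro equalityI subsetI)
    fix x assume "x \<in> fixpts p k"
    then have "x = 0 \<or> (\<exists>r. 0 < r \<and> r \<le> a \<and> hfun m r = 1/a \<and> x = r/a)"
      using FC by simp
    then show "x \<in> {0, r1/a, r2/a}"
    proof
      assume "\<exists>r. 0 < r \<and> r \<le> a \<and> hfun m r = 1/a \<and> x = r/a"
      then obtain r where r: "0 < r" "r \<le> a" "hfun m r = 1/a" "x = r/a" by blast
      have "r \<in> {r. 0 < r \<and> r \<le> 1 \<and> hfun m r = 1/a}" using r a by simp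
      then have "r \<in> {r1, r2}" unfolding S .
      then show ?thesis using r(4) by auto
    qed simp
  next
    fix x assume x: "x \<in> {0, r1/a, r2/a}"
    have r1p: "0 < r1" using rr by simp
    have r2p: "0 < r2" using rr rstar[OF m] by simp
    from x consider "x = 0" | "x = r1/a" | "x = r2/a" by blast
    then show "x \<in> fixpts p k"
    proof cases
      case 1 then show ?thesis using FC by simp
    next
      case 2
      then have "\<exists>r. 0 < r \<and> r \<le> a \<and> hfun m r = 1/a \<and> x = r/a"
        using r1p r1a h1 by blast
      then show ?thesis using FC by simp
    next
      case 3
      then have "\<exists>r. 0 < r \<and> r \<le> a \<and> hfun m r = 1/a \<and> x = r/a"
        using r2p r2a h2 by blast
      then show ?thesis using FC by simp
    qed
  qed
  moreover have "1/2 \<le> r1/a"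
  proof -
    have "r1 \<le> r1/a" using a rr by (simp add: le_divide_eq mult_left_le)
    then show ?thesis using rr by linarith
  qed
  moreover have "r1/a < r2/a" using rr a by (intro divide_strict_right_mono) auto
  moreover have "r2/a \<le> 1" using r2a a by simp
  ultimately show ?thesis by (intro exI[of _ "r1/a"] exI[of _ "r2/a"]) simp
qed

lemma fix_eq:
  assumes m: "m \<ge> 2" and k: "k = 2*m-1"
  shows "\<exists>x. x > 0 \<and> fixpts (pst m) k = {0, x}"
proof -
  define p where "p = pst m"
  define a where "a = 1 - p"
  have M1: "Mm m > 1" using M_gt1[OF m] .
  have p: "0 \<le> p" "p < 1" using pst_bounds[OF m] unfolding p_def by auto
  have a: "a = 1 / Mm m" "0 < a" using M1 unfolding a_def p_def pst_def by auto
  have a1: "a \<le> 1" using M1 a by simp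
  have ya: "1/a = Mm m" using a by simp
  have rsa: "rstar m \<le> a" using rstar_le_invM[OF m] a by simp
  have FC: "\<And>x. x \<in> fixpts p k \<longleftrightarrow> x = 0 \<or> (\<exists>r. 0 < r \<and> r \<le> a \<and> hfun m r = 1/a \<and> x = r/a)"
    using fix_char[OF m k p] unfolding a_def .
  have "fixpts p k = {0, rstar m / a}"
  proof (intro equalityI subsetI)
    fix x assume "x \<in> fixpts p k"
    then have "x = 0 \<or> (\<exists>r. 0 < r \<and> r \<le> a \<and> hfun m r = 1/a \<and> x = r/a)"
      using FC by simp
    then show "x \<in> {0, rstar m / a}"
    proof
      assume "\<exists>r. 0 < r \<and> r \<le> a \<and> hfun m r = 1/a \<and> x = r/a"
      then obtain r where r: "0 < r" "r \<le> a" "hfun m r = 1/a" "x = r/a" by blast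
      have "r \<le> 1" using r a1 by simp
      have "r = rstar m"
      proof (rule ccontr)
        assume "r \<noteq> rstar m"
        then have "hfun m r < Mm m" using hfun_le_M(2)[OF m r(1) \<open>r \<le> 1\<close>] by blast
        then show False using r(3) ya by simp
      qed
      then show ?thesis using r(4) by simp
    qed simp
  next
    fix x assume x: "x \<in> {0, rstar m / a}"
    have "0 < rstar m" using rstar[OF m] by simp
    from x consider "x = 0" | "x = rstar m / a" by blast
    then show "x \<in> fixpts p k"
    proof cases
      case 1 then show ?thesis using FC by simp
    next
      case 2
      have "hfun m (rstar m) = 1/a" using ya unfolding Mm_def by simp
      then have "\<exists>r. 0 < r \<and> r \<le> a \<and> hfun m r = 1/a \<and> x = r/a"
        using \<open>0 < rstar m\<close> rsa 2 by blast
      then show ?thesis using FC by simp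
    qed
  qed
  moreover have "rstar m / a > 0" using rstar[OF m] a by auto
  ultimately show ?thesis unfolding p_def by (intro exI[of _ "rstar m / a"]) simp
qed

lemma fix_gt:
  assumes m: "m \<ge> 2" and k: "k = 2*m-1" and p: "pst m < p" "p \<le> 1"
  shows "fixpts p k = {0}"
proof (cases "p = 1")
  case True then show ?thesis using fix_p1[OF m k] by simp
next
  case False
  define a where "a = 1 - p"
  have M1: "Mm m > 1" using M_gt1[OF m] .
  have p': "0 \<le> p" "p < 1" using pst_bounds[OF m] p False by auto
  have a: "a < 1 / Mm m" "0 < a" using p p' unfolding a_def pst_def by auto
  have ya: "1/a > Mm m" using a M1 by (simp add: field_simps)
  have FC: "\<And>x. x \<in> fixpts p k \<longleftrightarrow> x = 0 \<or> (\<exists>r. 0 < r \<and> r \<le> a \<and> hfun m r = 1/a \<and> x = r/a)"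
    using fix_char[OF m k p'] unfolding a_def .
  have "\<not> (\<exists>r. 0 < r \<and> r \<le> a \<and> hfun m r = 1/a \<and> x = r/a)" for x
  proof
    assume "\<exists>r. 0 < r \<and> r \<le> a \<and> hfun m r = 1/a \<and> x = r/a"
    then obtain r where r: "0 < r" "r \<le> a" "hfun m r = 1/a" by blast
    have "r \<le> 1" using r p' unfolding a_def by simp
    then show False using hfun_le_M(1)[OF m r(1)] r ya by simp
  qed
  then have "\<And>x. x \<in> fixpts p k \<longleftrightarrow> x = 0" using FC by blast
  then show ?thesis by blast
qed

lemma pstar_eq: assumes m: "m \<ge> 2" and k: "k = 2*m-1" shows "pstar k = pst m"
  unfolding pstar_def
proof (rule the_equality)
  show "1/9 \<le> pst m \<and> pst m < 1/2 \<and>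
      (\<forall>p. 0 \<le> p \<and> p < pst m \<longrightarrow> card (fixpts p k) = 3) \<and>
      card (fixpts (pst m) k) = 2 \<and>
      (\<forall>p. pst m < p \<and> p \<le> 1 \<longrightarrow> fixpts p k = {0})"
  proof (intro conjI allI impI)
    fix p assume "0 \<le> p \<and> p < pst m"
    then obtain x1 x2 where "1/2 \<le> x1" "x1 < x2" "fixpts p k = {0, x1, x2}"
      using fix_lt[OF m k] by blast
    then show "card (fixpts p k) = 3" by auto
  next
    obtain x where "x > 0" "fixpts (pst m) k = {0, x}" using fix_eq[OF m k] by blast
    then show "card (fixpts (pst m) k) = 2" by auto
  qed (use pst_bounds[OF m] fix_gt[OF m k] in auto)
next
  fix ps assume H: "1/9 \<le> ps \<and> ps < 1/2 \<and>
      (\<forall>p. 0 \<le> p \<and> p < ps \<longrightarrow> card (fixpts p k) = 3) \<and>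
      card (fixpts ps k) = 2 \<and>
      (\<forall>p. ps < p \<and> p \<le> 1 \<longrightarrow> fixpts p k = {0})"
  have H3: "\<And>p. 0 \<le> p \<Longrightarrow> p < ps \<Longrightarrow> card (fixpts p k) = 3" using H by blast
  have H5: "\<And>p. ps < p \<Longrightarrow> p \<le> 1 \<Longrightarrow> fixpts p k = {0}" using H by blast
  have H1: "1/9 \<le> ps" using H by blast
  show "ps = pst m"
  proof (rule ccontr)
    assume "ps \<noteq> pst m"
    then consider "ps < pst m" | "pst m < ps" by linarith
    then show False
    proof cases
      case 1
      define p where "p = (ps + pst m)/2"
      have "ps < p" "p < pst m" "0 \<le> p" using 1 H1 unfolding p_def by auto
      have "p \<le> 1" using \<open>p < pst m\<close> pst_bounds[OF m] by simp
      have "fixpts p k = {0}" using H5 \<open>ps < p\<close> \<open>p \<le> 1\<close> by blast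
      moreover obtain x1 x2 where "1/2 \<le> x1" "x1 < x2" "fixpts p k = {0, x1, x2}"
        using fix_lt[OF m k \<open>0 \<le> p\<close> \<open>p < pst m\<close>] by blast
      ultimately show False by auto
    next
      case 2
      have "0 \<le> pst m" using pst_bounds[OF m] by simp
      then have "card (fixpts (pst m) k) = 3" using H3 2 by blast
      moreover obtain x where "x > 0" "fixpts (pst m) k = {0, x}" using fix_eq[OF m k] by blast
      ultimately show False by auto
    qed
  qed
qed

lemma fix_finite_le:
  assumes m: "m \<ge> 2" and k: "k = 2*m-1" and p: "0 \<le> p" "p \<le> pst m"
  shows "finite (fixpts p k)" "fixpts p k - {0} \<noteq> {}"
proof -
  have "finite (fixpts p k) \<and> fixpts p k - {0} \<noteq> {}"
  proof (cases "p = pst m")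
    case True
    obtain x where "x > 0" "fixpts (pst m) k = {0, x}" using fix_eq[OF m k] by blast
    then show ?thesis using True by auto
  next
    case False
    then have "p < pst m" using p by simp
    obtain x1 x2 where "1/2 \<le> x1" "x1 < x2" "fixpts p k = {0, x1, x2}" using fix_lt[OF m k p(1) \<open>p < pst m\<close>] by blast
    then show ?thesis by auto
  qed
  then show "finite (fixpts p k)" "fixpts p k - {0} \<noteq> {}" by auto
qed

lemma Gm_cont2: "m \<ge> 1 \<Longrightarrow> continuous_on UNIV (\<lambda>z::real\<times>real. Gm m ((1 - fst z) * snd z))"
  by (rule continuous_on_compose2[OF Gm_continuous_on[of m UNIV]]) (auto intro!: continuous_intros)

lemma pstar_q_le:
  assumes m: "m \<ge> 2" and k: "k = 2*m-1" and q: "1/2 < q" "q \<le> 1"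
  shows "pstar_q k q \<le> pst m"
proof -
  have m1: "m \<ge> 1" using m by simp
  have pse: "pstar k = pst m" by (rule pstar_eq[OF m k])
  define S where "S = {p. 0 \<le> p \<and> p \<le> pstar k \<and> phi_minus p k \<le> q}"
  define C where "C = ({0..pst m} \<times> {1/2..q}) \<inter> {z::real\<times>real. Gm m ((1 - fst z) * snd z) = snd z}"
  have SC: "S = fst ` C"
  proof (intro equalityI subsetI)
    fix p assume "p \<in> S"
    then have p: "0 \<le> p" "p \<le> pst m" "phi_minus p k \<le> q" unfolding S_def pse by auto
    have p1: "p < 1" using p pst_bounds[OF m] by simp
    have fin: "finite (fixpts p k - {0})" "fixpts p k - {0} \<noteq> {}" using fix_finite_le[OF m k p(1,2)] by auto
    define x where "x = phi_minus p k"
    have xin: "x \<in> fixpts p k - {0}" unfolding x_def phi_minus_def using fin by (rule Min_in)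
    have x2: "x \<ge> 1/2" using fix_ge_half[OF m k p(1) p1] xin by auto
    have x01: "0 \<le> x" "x \<le> 1" using xin unfolding fixpts_def by auto
    have "F p k x = x" using xin unfolding fixpts_def by auto
    then have "Gm m ((1-p)*x) = x" using F_eq'[OF m1 k p(1) _ x01] p1 by simp
    then have "(p, x) \<in> C" unfolding C_def using p x2 x_def by auto
    then show "p \<in> fst ` C" by force
  next
    fix p assume "p \<in> fst ` C"
    then obtain x where px: "(p, x) \<in> C" by force
    then have p: "0 \<le> p" "p \<le> pst m" and x: "1/2 \<le> x" "x \<le> q" and G: "Gm m ((1-p)*x) = x"
      unfolding C_def by auto
    have p1: "p < 1" using p pst_bounds[OF m] by simp
    have x01: "0 \<le> x" "x \<le> 1" using x q by auto
    have "F p k x = x" using G F_eq'[OF m1 k p(1) _ x01] p1 by simp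
    then have "x \<in> fixpts p k - {0}" unfolding fixpts_def using x01 x by auto
    then have "phi_minus p k \<le> x" unfolding phi_minus_def
      using fix_finite_le[OF m k p] by (intro Min_le) auto
    then show "p \<in> S" unfolding S_def pse using p x by auto
  qed
  have "compact C"
    unfolding C_def
    by (intro compact_Int_closed compact_Times compact_Icc closed_Collect_eq Gm_cont2 m1 continuous_intros)
  then have cS: "compact S" unfolding SC by (intro compact_continuous_image continuous_intros)
  have "(0, 1/2) \<in> C" unfolding C_def using Gm_half[OF m1] q pst_bounds[OF m] by auto
  then have "S \<noteq> {}" unfolding SC by force
  then obtain s where s: "s \<in> S" "\<forall>t\<in>S. t \<le> s" using compact_attains_sup[OF cS] by blast
  have "pstar_q k q = s" unfolding pstar_q_def
    by (rule Greatest_equality) (use s in \<open>auto simp: S_def\<close>)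
  then show ?thesis using s(1) unfolding S_def pse by simp
qed

lemma phiF_deriv: assumes "m \<ge> 1"
  shows "((\<lambda>x. Gm m (a*x)) has_real_derivative a * Dm m (a*x)) (at x)"
proof -
  have "((\<lambda>x. Gm m (a*x)) has_real_derivative Dm m (a*x) * a) (at x)"
    by (rule Gm_deriv_comp[OF assms]) (rule DERIV_cmult_Id)
  then show ?thesis by (simp add: mult.commute)
qed

lemma phiF_mvt: assumes "m \<ge> 1" "y < z"
  shows "\<exists>\<xi>. y < \<xi> \<and> \<xi> < z \<and> Gm m (a*z) - Gm m (a*y) = (z - y) * (a * Dm m (a*\<xi>))"
  using MVT2[OF assms(2), of "\<lambda>x. Gm m (a*x)" "\<lambda>x. a * Dm m (a*x)"] phiF_deriv[OF assms(1)] by blast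

lemma phiF_mono: assumes "m \<ge> 1" "0 \<le> a" "a \<le> 1" "0 \<le> y" "y \<le> z" "z \<le> 1"
  shows "Gm m (a*y) \<le> Gm m (a*z)"
proof (cases "y = z")
  case False
  then have "y < z" using assms by simp
  then obtain \<xi> where \<xi>: "y < \<xi>" "\<xi> < z" "Gm m (a*z) - Gm m (a*y) = (z - y) * (a * Dm m (a*\<xi>))"
    using phiF_mvt[OF assms(1)] by blast
  have "a*\<xi> \<le> 1" using assms \<xi> by (intro mult_le_one) auto
  then have "Dm m (a*\<xi>) \<ge> 0" using assms \<xi> by (intro Dm_nonneg) auto
  then have "(z - y) * (a * Dm m (a*\<xi>)) \<ge> 0" using assms \<xi> by simp
  then show ?thesis using \<xi> by simp
qed simp

lemma mu_props:
  assumes m: "m \<ge> 2" and k: "k = 2*m-1" and p: "0 \<le> p" "p < pst m"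
  shows "\<exists>x1 x2. 1/2 \<le> x1 \<and> x1 < mu p k \<and> mu p k < x2 \<and> x2 \<le> 1 \<and> F p k x2 = x2 \<and>
      (1-p) * mu p k > 1/2 \<and> (1-p) * Dm m ((1-p) * mu p k) = 1"
proof -
  define a where "a = 1 - p"
  have m1: "m \<ge> 1" using m by simp
  have p1: "p < 1/2" using p pst_bounds[OF m] by simp
  have a: "1/2 < a" "a \<le> 1" using p p1 unfolding a_def by auto
  obtain x1 x2 where xx: "1/2 \<le> x1" "x1 < x2" "x2 \<le> 1" and fx: "fixpts p k = {0, x1, x2}"
    using fix_lt[OF m k p] by blast
  have Fx: "F p k x = Gm m (a*x)" if "0 \<le> x" "x \<le> 1" for x
    using F_eq'[OF m1 k p(1) _ that] p1 unfolding a_def by simp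
  have "x1 \<in> fixpts p k" "x2 \<in> fixpts p k" using fx by auto
  then have "F p k x1 = x1" "F p k x2 = x2" unfolding fixpts_def by auto
  then have G1: "Gm m (a*x1) = x1" and G2: "Gm m (a*x2) = x2"
    using xx Fx[of x1] Fx[of x2] by auto
  have pm: "phi_minus p k = x1" and pp: "phi_plus p k = x2"
  proof -
    have "fixpts p k - {0} = {x1, x2}" using fx xx by auto
    then show "phi_minus p k = x1" "phi_plus p k = x2"
      unfolding phi_minus_def phi_plus_def using xx by (auto simp: min_def max_def)
  qed
  obtain \<xi> where \<xi>: "x1 < \<xi>" "\<xi> < x2" "Gm m (a*x2) - Gm m (a*x1) = (x2 - x1) * (a * Dm m (a*\<xi>))"
    using phiF_mvt[OF m1 xx(2)] by blast
  have d\<xi>: "a * Dm m (a*\<xi>) = 1" using \<xi>(3) G1 G2 xx by simp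
  have "0 < x1" using xx by simp
  then obtain \<zeta> where \<zeta>: "0 < \<zeta>" "\<zeta> < x1" "Gm m (a*x1) - Gm m (a*0) = (x1 - 0) * (a * Dm m (a*\<zeta>))"
    using phiF_mvt[OF m1, of 0 x1 a] by blast
  have d\<zeta>: "a * Dm m (a*\<zeta>) = 1" using \<zeta>(3) G1 Gm_0[OF m1] xx by simp
  have uniq: "\<eta> = \<xi>" if "x1 < \<eta>" "\<eta> < x2" "a * Dm m (a*\<eta>) = 1" for \<eta>
  proof (rule ccontr)
    assume ne: "\<eta> \<noteq> \<xi>"
    define u where "u = a*\<zeta>"
    define v where "v = a * min \<eta> \<xi>"
    define w where "w = a * max \<eta> \<xi>"
    have uvw: "0 \<le> u" "u < v" "v < w" "w \<le> 1"
      using a \<zeta> \<xi> that ne xx unfolding u_def v_def w_def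
      by (auto simp: min_def max_def intro: mult_le_one)
    have "Dm m u = 1/a" "Dm m v = 1/a" "Dm m w = 1/a"
      using d\<zeta> d\<xi> that(3) a unfolding u_def v_def w_def by (auto simp: min_def max_def field_simps)
    then show False using Dm_unimodal[OF m uvw] by simp
  qed
  have dF: "deriv (F p k) x = a * Dm m (a*x)" if "0 < x" "x < 1" for x
  proof -
    have "(F p k has_real_derivative a * Dm m (a*x)) (at x)"
      by (rule has_field_derivative_transform_within_open[OF phiF_deriv[OF m1], where S="{0<..<1}"])
         (use that Fx in auto)
    then show ?thesis by (rule DERIV_imp_deriv)
  qed
  have mu: "mu p k = \<xi>" unfolding mu_def pm pp
  proof (rule the_equality)
    show "x1 < \<xi> \<and> \<xi> < x2 \<and> deriv (F p k) \<xi> = 1" using \<xi> dF[of \<xi>] d\<xi> xx by auto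
  next
    fix \<eta> assume "x1 < \<eta> \<and> \<eta> < x2 \<and> deriv (F p k) \<eta> = 1"
    then show "\<eta> = \<xi>" using uniq dF[of \<eta>] xx by auto
  qed
  have "a * \<xi> > 1/2"
  proof (rule ccontr)
    assume "\<not> a * \<xi> > 1/2"
    then have "Dm m (a*\<zeta>) < Dm m (a*\<xi>)" using a \<zeta> \<xi> by (intro Dm_inc[OF m]) auto
    then have "a * Dm m (a*\<zeta>) < a * Dm m (a*\<xi>)" using a by (intro mult_strict_left_mono) auto
    then show False using d\<zeta> d\<xi> by simp
  qed
  then show ?thesis using xx \<xi> d\<xi> G2 Fx[of x2] unfolding mu a_def by (intro exI[of _ x1] exI[of _ x2]) auto
qed

lemma contraction_pkg:
  assumes m: "m \<ge> 2" and k: "k = 2*m-1" and p: "0 \<le> p" "p < pst m" and q: "mu p k < q" "q \<le> 1"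
  shows "\<exists>L L' c. 0 \<le> L' \<and> L' < L \<and> L \<le> q \<and> 0 \<le> c \<and> c < 1 \<and>
     (\<forall>t. L \<le> (F p k ^^ t) q \<and> (F p k ^^ t) q \<le> 1) \<and>
     (\<forall>y z. L' \<le> y \<longrightarrow> y \<le> 1 \<longrightarrow> L' \<le> z \<longrightarrow> z \<le> 1 \<longrightarrow> \<bar>F p k y - F p k z\<bar> \<le> c * \<bar>y - z\<bar>)"
proof -
  define a where "a = 1 - p"
  have m1: "m \<ge> 1" using m by simp
  have p1: "p < 1/2" using p pst_bounds[OF m] by simp
  have a: "1/2 < a" "a \<le> 1" using p p1 unfolding a_def by auto
  obtain x1 x2 where xx: "1/2 \<le> x1" "x1 < mu p k" "mu p k < x2" "x2 \<le> 1" "F p k x2 = x2"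
    and amu: "a * mu p k > 1/2" "a * Dm m (a * mu p k) = 1"
    using mu_props[OF m k p] unfolding a_def by blast
  define \<mu> where "\<mu> = mu p k"
  have Fx: "F p k x = Gm m (a*x)" if "0 \<le> x" "x \<le> 1" for x
    using F_eq'[OF m1 k p(1) _ that] p1 unfolding a_def by simp
  have dlt: "a * Dm m (a*x) < 1" if "\<mu> < x" "x \<le> 1" for x
  proof -
    have "0 \<le> x" using that xx unfolding \<mu>_def by linarith
    then have "a * x \<le> 1" using a that by (intro mult_le_one) auto
    have "a * \<mu> < a * x" using a that by (intro mult_strict_left_mono) auto
    then have "Dm m (a*x) < Dm m (a*\<mu>)"
      using amu \<open>a * x \<le> 1\<close> by (intro Dm_dec[OF m]) (auto simp: \<mu>_def)
    then have "a * Dm m (a*x) < a * Dm m (a*\<mu>)" using a by (intro mult_strict_left_mono) auto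
    then show ?thesis using amu unfolding \<mu>_def by simp
  qed
  define L where "L = min q x2"
  define L' where "L' = (\<mu> + L)/2"
  define c where "c = a * Dm m (a*L')"
  have L: "\<mu> < L" "L \<le> q" "L \<le> 1" "0 \<le> L" using q xx unfolding L_def \<mu>_def by auto
  have L': "\<mu> < L'" "L' < L" "0 \<le> L'" using L xx unfolding L'_def \<mu>_def by auto
  have c: "c < 1" "0 \<le> c" unfolding c_def using dlt[of L'] L L' a
    by (auto intro!: mult_nonneg_nonneg Dm_nonneg[OF m1] mult_le_one)
  have FL: "F p k L \<ge> L"
  proof (cases "L = x2")
    case True then show ?thesis using xx by simp
  next
    case False
    then have Lq: "L = q" "q < x2" unfolding L_def by auto
    obtain \<eta> where \<eta>: "q < \<eta>" "\<eta> < x2" "Gm m (a*x2) - Gm m (a*q) = (x2 - q) * (a * Dm m (a*\<eta>))"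
      using phiF_mvt[OF m1 Lq(2)] by blast
    have "a * Dm m (a*\<eta>) < 1" using dlt[of \<eta>] \<eta> L Lq xx by auto
    then have "(x2 - q) * (a * Dm m (a*\<eta>)) < (x2 - q) * 1" using Lq by (intro mult_strict_left_mono) auto
    then have "Gm m (a*q) > q" using \<eta>(3) xx Fx[of x2] by simp
    then show ?thesis using Fx[of q] Lq L by simp
  qed
  have traj: "L \<le> (F p k ^^ t) q \<and> (F p k ^^ t) q \<le> 1" for t
  proof (induction t)
    case 0 then show ?case using L q by simp
  next
    case (Suc t)
    define y where "y = (F p k ^^ t) q"
    have y: "L \<le> y" "y \<le> 1" using Suc unfolding y_def by auto
    have "F p k y = Gm m (a*y)" using Fx y L by simp
    moreover have "Gm m (a*L) \<le> Gm m (a*y)" using y L a by (intro phiF_mono[OF m1]) auto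
    moreover have "Gm m (a*y) \<le> 1" using y L a by (intro Gm_le1[OF m1]) (auto intro: mult_le_one)
    ultimately show ?case using FL Fx[of L] L unfolding y_def by simp
  qed
  have lip: "\<bar>F p k y - F p k z\<bar> \<le> c * \<bar>y - z\<bar>" if "L' \<le> y" "y \<le> 1" "L' \<le> z" "z \<le> 1" for y z
  proof -
    have gen: "\<bar>F p k y - F p k z\<bar> \<le> c * \<bar>y - z\<bar>" if yz: "L' \<le> y" "y < z" "z \<le> 1" for y z
    proof -
      obtain \<eta> where \<eta>: "y < \<eta>" "\<eta> < z" "Gm m (a*z) - Gm m (a*y) = (z - y) * (a * Dm m (a*\<eta>))"
        using phiF_mvt[OF m1 yz(2)] by blast
      have "a * \<mu> < a * L'" using L' a by (intro mult_strict_left_mono) auto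
      then have "a*L' > 1/2" using amu unfolding \<mu>_def by simp
      have "Dm m (a*\<eta>) \<le> Dm m (a*L')"
      proof -
        have "a * L' < a * \<eta>" using \<eta> yz a by (intro mult_strict_left_mono) auto
        moreover have "a * \<eta> \<le> 1" using \<eta> yz a L' by (intro mult_le_one) auto
        ultimately show ?thesis using Dm_dec[OF m, of "a*L'" "a*\<eta>"] \<open>a*L' > 1/2\<close> by simp
      qed
      moreover have "Dm m (a*\<eta>) \<ge> 0" using \<eta> yz a L' by (intro Dm_nonneg[OF m1]) (auto intro: mult_le_one)
      ultimately have "a * Dm m (a*\<eta>) \<le> c" "a * Dm m (a*\<eta>) \<ge> 0" unfolding c_def using a by auto
      then have "(z - y) * (a * Dm m (a*\<eta>)) \<le> (z - y) * c" "(z - y) * (a * Dm m (a*\<eta>)) \<ge> 0"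
        using yz by (auto intro: mult_left_mono)
      moreover have "F p k z - F p k y = (z - y) * (a * Dm m (a*\<eta>))"
        using Fx[of z] Fx[of y] yz L' \<eta>(3) by simp
      ultimately have h: "F p k z - F p k y \<le> (z - y) * c" "F p k z - F p k y \<ge> 0" by linarith+
      have "\<bar>F p k y - F p k z\<bar> = F p k z - F p k y" using h(2) by simp
      moreover have "\<bar>y - z\<bar> = z - y" using yz by simp
      ultimately show ?thesis using h(1) by (simp add: mult.commute)
    qed
    consider "y < z" | "y = z" | "z < y" by linarith
    then show ?thesis
    proof cases
      case 1 then show ?thesis using gen that by blast
    next
      case 3 then show ?thesis using gen[of z y] that by (simp add: abs_minus_commute)
    qed simp
  qed
  show ?thesis
    by (rule exI[of _ L], rule exI[of _ L'], rule exI[of _ c]) (use L L' L c traj lip in auto)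
qed

lemma bool_pmf_eq: "N = bernoulli_pmf (pmf N True)"
proof (rule pmf_eqI)
  fix b :: bool
  have h: "0 \<le> pmf N True" "pmf N True \<le> 1" by (simp_all add: pmf_le_1)
  show "pmf N b = pmf (bernoulli_pmf (pmf N True)) b"
    using h by (cases b) (simp_all add: pmf_False_conv_True)
qed

lemma seen_True:
  assumes fin: "finite (nbhd E n u)" and ne: "nbhd E n u \<noteq> {}" and p: "0 \<le> p" "p \<le> 1"
  shows "pmf (seen E n p x u) True = (1-p) * phi E n x u"
proof -
  define N where "N = nbhd E n u"
  have inner: "pmf (bind_pmf (bernoulli_pmf p) (\<lambda>b. return_pmf (\<not> b \<and> x v))) True = (if x v then 1 - p else 0)" for v
  proof -
    have "bind_pmf (bernoulli_pmf p) (\<lambda>b. return_pmf (\<not> b \<and> x v)) = map_pmf (\<lambda>b. \<not> b \<and> x v) (bernoulli_pmf p)"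
      by (simp add: map_pmf_def)
    moreover have "{b. \<not> b} = {False}" by auto
    ultimately show ?thesis using p by (cases "x v") (simp_all add: pmf_map vimage_def measure_pmf_single)
  qed
  define g where "g = (\<lambda>v. bind_pmf (bernoulli_pmf p) (\<lambda>b. return_pmf (\<not> b \<and> x v)))"
  have "seen E n p x u = bind_pmf (pmf_of_set N) g" unfolding seen_def g_def N_def ..
  then have "pmf (seen E n p x u) True = (\<integral>v. pmf (g v) True \<partial>measure_pmf (pmf_of_set N))"
    by (simp only: pmf_bind)
  also have "\<dots> = (\<integral>v. (if x v then 1 - p else 0) \<partial>measure_pmf (pmf_of_set N))"
    unfolding g_def inner ..
  also have "\<dots> = (\<Sum>v\<in>N. (if x v then 1 - p else 0)) / real (card N)"
    using fin ne unfolding N_def by (simp add: integral_pmf_of_set)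
  also have "(\<Sum>v\<in>N. (if x v then 1 - p else 0)) = (1-p) * real (card {v\<in>N. x v})"
    using fin unfolding N_def by (simp add: sum.If_cases Int_def)
  finally show ?thesis unfolding phi_def N_def by simp
qed

lemma phi_01: "0 \<le> phi E n x u" "phi E n x u \<le> 1"
proof -
  show "0 \<le> phi E n x u" unfolding phi_def by simp
  have "finite (nbhd E n u)" unfolding nbhd_def by simp
  then have "card {v \<in> nbhd E n u. x v} \<le> card (nbhd E n u)" by (intro card_mono) auto
  then show "phi E n x u \<le> 1" unfolding phi_def
    by (cases "card (nbhd E n u) = 0") (auto simp: divide_le_eq_1)
qed

lemma seen_eq:
  assumes ne: "nbhd E n u \<noteq> {}" and p: "0 \<le> p" "p \<le> 1"
  shows "seen E n p x u = bernoulli_pmf ((1-p) * phi E n x u)"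
proof -
  have fin: "finite (nbhd E n u)" unfolding nbhd_def by simp
  show ?thesis by (subst bool_pmf_eq) (simp add: seen_True[OF fin ne p])
qed

lemma card_not: "finite A \<Longrightarrow> card {i\<in>A. \<not> s i} = card A - card {i\<in>A. s i}"
proof -
  assume "finite A"
  have "{i\<in>A. \<not> s i} = A - {i\<in>A. s i}" by auto
  then show ?thesis using \<open>finite A\<close> by (simp add: card_Diff_subset)
qed

lemma node_update_eq:
  assumes ne: "nbhd E n u \<noteq> {}" and p: "0 \<le> p" "p \<le> 1"
  shows "node_update E n k p x u = bernoulli_pmf (F p k (phi E n x u))"
proof -
  define r where "r = (1-p) * phi E n x u"
  have r: "r \<in> {0..1}" unfolding r_def using p phi_01[of E n x u] by (auto intro: mult_le_one)
  have "node_update E n k p x u =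
     map_pmf (\<lambda>s. card {i \<in> {..<k}. s i} > card {i \<in> {..<k}. \<not> s i})
       (Pi_pmf {..<k} False (\<lambda>_. bernoulli_pmf r))"
    unfolding node_update_def seen_eq[OF ne p] r_def ..
  also have "\<dots> = map_pmf (\<lambda>j. k < 2*j) (map_pmf (\<lambda>s. card {i \<in> {..<k}. s i}) (Pi_pmf {..<k} False (\<lambda>_. bernoulli_pmf r)))"
  proof -
    have cn: "card {i \<in> {..<k}. \<not> s i} = k - card {i\<in>{..<k}. s i}" for s
      using card_not[of "{..<k}" s] by simp
    have cl: "card {i\<in>{..<k}. s i} \<le> k" for s
      using card_mono[of "{..<k}" "{i\<in>{..<k}. s i}"] by auto
    have "(card {i \<in> {..<k}. s i} > card {i \<in> {..<k}. \<not> s i}) = (k < 2 * card {i \<in> {..<k}. s i})" for s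
      unfolding cn using cl[of s] by linarith
    then show ?thesis unfolding map_pmf_comp by simp
  qed
  also have "map_pmf (\<lambda>s. card {i \<in> {..<k}. s i}) (Pi_pmf {..<k} False (\<lambda>_. bernoulli_pmf r)) = binomial_pmf k r"
    by (rule binomial_pmf_altdef'[symmetric]) (use r in auto)
  finally have eq: "node_update E n k p x u = map_pmf (\<lambda>j. k < 2*j) (binomial_pmf k r)" .
  have "pmf (node_update E n k p x u) True = measure_pmf.prob (binomial_pmf k r) {j. k < 2*j}"
    unfolding eq pmf_map by (simp add: vimage_def)
  also have "{j. k < 2*j} = {i. 2 * i \<ge> k + 1}" by auto
  finally have "pmf (node_update E n k p x u) True = F p k (phi E n x u)" unfolding F_def r_def .
  then show ?thesis by (subst bool_pmf_eq) simp
qed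

lemma sum_indicator_card: "finite S \<Longrightarrow> (\<Sum>w\<in>S. (if y w then 1 else 0::real)) = real (card {w\<in>S. y w})"
  by (simp add: sum.If_cases Int_def)

lemma hoeff_Pi:
  fixes P :: "nat \<Rightarrow> bool pmf"
  assumes A: "finite A" and S: "S \<subseteq> A" "S \<noteq> {}" and e: "e \<ge> 0"
  shows "measure_pmf.prob (Pi_pmf A False P)
     {y. \<bar>real (card {w\<in>S. y w}) - (\<Sum>w\<in>S. pmf (P w) True)\<bar> \<ge> e} \<le> 2 * exp (-2 * e^2 / real (card S))"
proof -
  define M where "M = measure_pmf (Pi_pmf A False P)"
  define X where "X = (\<lambda>w (y::nat \<Rightarrow> bool). if y w then 1 else (0::real))"
  have finS: "finite S" using A S finite_subset by blast
  have ps: "prob_space M" unfolding M_def by (rule measure_pmf.prob_space_axioms)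
  have ind0: "prob_space.indep_vars M (\<lambda>_. count_space UNIV) (\<lambda>x f. f x) A"
    unfolding M_def by (rule indep_vars_Pi_pmf[OF A])
  have ind1: "prob_space.indep_vars M (\<lambda>_. borel) (\<lambda>w y. (\<lambda>b. if b then 1 else (0::real)) (y w)) A"
    by (rule prob_space.indep_vars_compose2[OF ps ind0]) auto
  have ind: "prob_space.indep_vars M (\<lambda>_. borel) X S"
    using prob_space.indep_vars_subset[OF ps ind1 S(1)] unfolding X_def .
  have EX: "prob_space.expectation M (X w) = pmf (P w) True" if "w \<in> S" for w
  proof -
    have wA: "w \<in> A" using that S by auto
    have "prob_space.expectation M (X w) = measure_pmf.expectation (map_pmf (\<lambda>f. f w) (Pi_pmf A False P)) (\<lambda>b. if b then 1 else (0::real))"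
      unfolding M_def X_def by simp
    also have "map_pmf (\<lambda>f. f w) (Pi_pmf A False P) = P w" using Pi_pmf_component[OF A, of w False P] wA by simp
    also have "measure_pmf.expectation (P w) (\<lambda>b. if b then 1 else (0::real)) = measure_pmf.expectation (P w) (indicator {True})"
      by (intro Bochner_Integration.integral_cong) (auto simp: indicator_def)
    also have "\<dots> = pmf (P w) True" by (simp add: measure_pmf_single)
    finally show ?thesis .
  qed
  interpret H: Hoeffding_ineq M S X "\<lambda>_. 0" "\<lambda>_. 1" "\<Sum>w\<in>S. pmf (P w) True"
  proof unfold_locales
    show "finite S" by (rule finS)
    show "prob_space.indep_vars M (\<lambda>_. borel) X S" by (rule ind)
    show "(\<Sum>w\<in>S. pmf (P w) True) \<equiv> (\<Sum>i\<in>S. prob_space.expectation M (X i))"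
      using EX by simp
    fix i assume "i \<in> S"
    show "AE x in M. X i x \<in> {0..1}" unfolding X_def by simp
  qed (use ps in \<open>auto simp: prob_space_def finite_measure_def sigma_finite_measure_def prob_space_axioms_def finite_measure_axioms_def\<close>)
  have "H.prob {y\<in>space M. \<bar>(\<Sum>i\<in>S. X i y) - (\<Sum>w\<in>S. pmf (P w) True)\<bar> \<ge> e} \<le> 2 * exp (-2 * e\<^sup>2 / (\<Sum>i\<in>S. (1 - 0)\<^sup>2))"
    by (rule H.Hoeffding_ineq_abs_ge[OF e]) (use finS S in auto)
  moreover have "{y\<in>space M. \<bar>(\<Sum>i\<in>S. X i y) - (\<Sum>w\<in>S. pmf (P w) True)\<bar> \<ge> e} =
      {y. \<bar>real (card {w\<in>S. y w}) - (\<Sum>w\<in>S. pmf (P w) True)\<bar> \<ge> e}"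
    unfolding X_def sum_indicator_card[OF finS] by (simp add: M_def)
  moreover have "(\<Sum>i\<in>S. (1 - 0::real)\<^sup>2) = real (card S)" by simp
  ultimately show ?thesis unfolding M_def by simp
qed

lemma nbhd_sub: "nbhd E n v \<subseteq> {1..n}" unfolding nbhd_def by auto

lemma phi_conc:
  fixes P :: "nat \<Rightarrow> bool pmf"
  assumes ne: "nbhd E n v \<noteq> {}" and s: "s \<ge> 0"
  shows "measure_pmf.prob (Pi_pmf {1..n} False P)
     {y. \<bar>phi E n y v - (\<Sum>w\<in>nbhd E n v. pmf (P w) True) / real (card (nbhd E n v))\<bar> \<ge> s}
     \<le> 2 * exp (-2 * s^2 * real (card (nbhd E n v)))"
proof -
  define N where "N = nbhd E n v"
  define d where "d = real (card N)"
  have finN: "finite N" unfolding N_def nbhd_def by simp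
  have d: "d > 0" unfolding d_def using ne finN unfolding N_def by (simp add: card_gt_0_iff)
  have e: "s * d \<ge> 0" using s d by simp
  have H: "measure_pmf.prob (Pi_pmf {1..n} False P)
     {y. \<bar>real (card {w\<in>N. y w}) - (\<Sum>w\<in>N. pmf (P w) True)\<bar> \<ge> s * d} \<le> 2 * exp (-2 * (s*d)^2 / real (card N))"
    by (rule hoeff_Pi) (use nbhd_sub ne e in \<open>auto simp: N_def\<close>)
  have eq: "{y. \<bar>phi E n y v - (\<Sum>w\<in>N. pmf (P w) True) / d\<bar> \<ge> s} =
            {y. \<bar>real (card {w\<in>N. y w}) - (\<Sum>w\<in>N. pmf (P w) True)\<bar> \<ge> s * d}"
  proof (intro Collect_cong)
    fix y
    have "phi E n y v - (\<Sum>w\<in>N. pmf (P w) True) / d = (real (card {w\<in>N. y w}) - (\<Sum>w\<in>N. pmf (P w) True)) / d"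
      unfolding phi_def N_def[symmetric] d_def[symmetric] by (simp add: diff_divide_distrib)
    then have "\<bar>phi E n y v - (\<Sum>w\<in>N. pmf (P w) True) / d\<bar> = \<bar>real (card {w\<in>N. y w}) - (\<Sum>w\<in>N. pmf (P w) True)\<bar> / d"
      using d by simp
    then show "(\<bar>phi E n y v - (\<Sum>w\<in>N. pmf (P w) True) / d\<bar> \<ge> s) = (\<bar>real (card {w\<in>N. y w}) - (\<Sum>w\<in>N. pmf (P w) True)\<bar> \<ge> s * d)"
      using d by (simp add: le_divide_eq)
  qed
  have ex: "-2 * (s*d)^2 / d = -2 * s^2 * d" using d by (simp add: power2_eq_square)
  have H': "measure_pmf.prob (Pi_pmf {1..n} False P)
     {y. \<bar>real (card {w\<in>N. y w}) - (\<Sum>w\<in>N. pmf (P w) True)\<bar> \<ge> s * d} \<le> 2 * exp (-2 * (s*d)^2 / d)"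
    using H unfolding d_def .
  show ?thesis unfolding N_def[symmetric] d_def[symmetric] eq using H' unfolding ex .
qed

lemma union_conc:
  fixes P :: "nat \<Rightarrow> bool pmf"
  assumes nb: "\<And>v. v \<in> {1..n} \<Longrightarrow> nbhd E n v \<noteq> {} \<and> real (card (nbhd E n v)) \<ge> \<delta>" and s: "s \<ge> 0"
  shows "measure_pmf.prob (Pi_pmf {1..n} False P)
     {y. \<exists>v\<in>{1..n}. \<bar>phi E n y v - (\<Sum>w\<in>nbhd E n v. pmf (P w) True) / real (card (nbhd E n v))\<bar> \<ge> s}
     \<le> real n * (2 * exp (-2 * s^2 * \<delta>))"
proof -
  define A where "A = (\<lambda>v. {y. \<bar>phi E n y v - (\<Sum>w\<in>nbhd E n v. pmf (P w) True) / real (card (nbhd E n v))\<bar> \<ge> s})"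
  have "{y. \<exists>v\<in>{1..n}. \<bar>phi E n y v - (\<Sum>w\<in>nbhd E n v. pmf (P w) True) / real (card (nbhd E n v))\<bar> \<ge> s}
     = (\<Union>v\<in>{1..n}. A v)" unfolding A_def by auto
  moreover have "measure_pmf.prob (Pi_pmf {1..n} False P) (\<Union>v\<in>{1..n}. A v) \<le> (\<Sum>v\<in>{1..n}. measure_pmf.prob (Pi_pmf {1..n} False P) (A v))"
    by (rule measure_UNION_le) auto
  moreover have "(\<Sum>v\<in>{1..n}. measure_pmf.prob (Pi_pmf {1..n} False P) (A v)) \<le> (\<Sum>v\<in>{1..n}. 2 * exp (-2 * s^2 * \<delta>))"
  proof (rule sum_mono)
    fix v assume v: "v \<in> {1..n}"
    have "measure_pmf.prob (Pi_pmf {1..n} False P) (A v) \<le> 2 * exp (-2 * s^2 * real (card (nbhd E n v)))"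
      unfolding A_def by (rule phi_conc) (use nb[OF v] s in auto)
    also have "\<dots> \<le> 2 * exp (-2 * s^2 * \<delta>)"
      using nb[OF v] s by (simp add: mult_left_mono)
    finally show "measure_pmf.prob (Pi_pmf {1..n} False P) (A v) \<le> 2 * exp (-2 * s^2 * \<delta>)" .
  qed
  ultimately show ?thesis by simp
qed

lemma step_good:
  assumes nb: "\<And>v. v \<in> {1..n} \<Longrightarrow> nbhd E n v \<noteq> {} \<and> real (card (nbhd E n v)) \<ge> \<delta>"
    and p: "0 \<le> p" "p \<le> 1"
    and lip: "\<And>y z. L' \<le> y \<Longrightarrow> y \<le> 1 \<Longrightarrow> L' \<le> z \<Longrightarrow> z \<le> 1 \<Longrightarrow> \<bar>F p k y - F p k z\<bar> \<le> c * \<bar>y - z\<bar>"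
    and c: "0 \<le> c" "c < 1"
    and Q: "L' + \<epsilon> \<le> Q" "Q \<le> 1" and \<epsilon>: "\<epsilon> > 0"
    and good: "\<And>w. w \<in> {1..n} \<Longrightarrow> \<bar>phi E n x w - Q\<bar> \<le> \<epsilon>"
  shows "measure_pmf.prob (em_step E n k p x) {y. \<exists>v\<in>{1..n}. \<bar>phi E n y v - F p k Q\<bar> > \<epsilon>}
     \<le> real n * (2 * exp (-2 * ((1-c)*\<epsilon>)^2 * \<delta>))"
proof -
  define P where "P = (\<lambda>u. node_update E n k p x u)"
  define s where "s = (1-c)*\<epsilon>"
  have s: "s \<ge> 0" unfolding s_def using c \<epsilon> by simp
  have pP: "pmf (P w) True = F p k (phi E n x w)" if "w \<in> {1..n}" for w
  proof -
    have "P w = bernoulli_pmf (F p k (phi E n x w))"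
      unfolding P_def by (rule node_update_eq) (use nb[OF that] p in auto)
    moreover have "0 \<le> F p k (phi E n x w)" "F p k (phi E n x w) \<le> 1"
      unfolding F_def by simp_all
    ultimately show ?thesis by simp
  qed
  have sub: "{y. \<exists>v\<in>{1..n}. \<bar>phi E n y v - F p k Q\<bar> > \<epsilon>} \<subseteq>
     {y. \<exists>v\<in>{1..n}. \<bar>phi E n y v - (\<Sum>w\<in>nbhd E n v. pmf (P w) True) / real (card (nbhd E n v))\<bar> \<ge> s}"
  proof (intro subsetI CollectI)
    fix y assume "y \<in> {y. \<exists>v\<in>{1..n}. \<bar>phi E n y v - F p k Q\<bar> > \<epsilon>}"
    then obtain v where v: "v \<in> {1..n}" "\<bar>phi E n y v - F p k Q\<bar> > \<epsilon>" by blast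
    define N where "N = nbhd E n v"
    have finN: "finite N" unfolding N_def nbhd_def by simp
    have d: "card N > 0" using nb[OF v(1)] finN unfolding N_def by (simp add: card_gt_0_iff)
    have NV: "N \<subseteq> {1..n}" unfolding N_def by (rule nbhd_sub)
    have close: "\<bar>F p k (phi E n x w) - F p k Q\<bar> \<le> c * \<epsilon>" if "w \<in> N" for w
    proof -
      have w: "w \<in> {1..n}" using that NV by auto
      have "L' \<le> phi E n x w" using good[OF w] Q by linarith
      then have "\<bar>F p k (phi E n x w) - F p k Q\<bar> \<le> c * \<bar>phi E n x w - Q\<bar>"
        using lip[of "phi E n x w" Q] phi_01[of E n x w] Q \<epsilon> by linarith
      also have "\<dots> \<le> c * \<epsilon>" using good[OF w] c by (intro mult_left_mono) auto
      finally show ?thesis .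
    qed
    have "\<bar>(\<Sum>w\<in>N. pmf (P w) True) / real (card N) - F p k Q\<bar> = \<bar>(\<Sum>w\<in>N. F p k (phi E n x w) - F p k Q)\<bar> / real (card N)"
    proof -
      have "(\<Sum>w\<in>N. pmf (P w) True) = (\<Sum>w\<in>N. F p k (phi E n x w))"
        using pP NV by (intro sum.cong) auto
      moreover have "(\<Sum>w\<in>N. F p k (phi E n x w) - F p k Q) = (\<Sum>w\<in>N. F p k (phi E n x w)) - real (card N) * F p k Q"
        by (simp add: sum_subtractf)
      ultimately show ?thesis using d by (simp add: field_simps)
    qed
    also have "\<dots> \<le> (\<Sum>w\<in>N. \<bar>F p k (phi E n x w) - F p k Q\<bar>) / real (card N)"
      using d by (intro divide_right_mono sum_abs) auto
    also have "\<dots> \<le> (\<Sum>w\<in>N. c * \<epsilon>) / real (card N)"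
      using d close by (intro divide_right_mono sum_mono) auto
    also have "\<dots> = c * \<epsilon>" using d by simp
    finally have avg: "\<bar>(\<Sum>w\<in>N. pmf (P w) True) / real (card N) - F p k Q\<bar> \<le> c * \<epsilon>" .
    have "\<bar>phi E n y v - (\<Sum>w\<in>N. pmf (P w) True) / real (card N)\<bar> \<ge> s"
    proof (rule ccontr)
      assume "\<not> ?thesis"
      then have "\<bar>phi E n y v - F p k Q\<bar> < s + c * \<epsilon>" using avg by linarith
      then show False using v(2) unfolding s_def by (simp add: algebra_simps)
    qed
    then show "\<exists>v\<in>{1..n}. \<bar>phi E n y v - (\<Sum>w\<in>nbhd E n v. pmf (P w) True) / real (card (nbhd E n v))\<bar> \<ge> s"
      using v(1) unfolding N_def by blast
  qed
  have "measure_pmf.prob (em_step E n k p x) {y. \<exists>v\<in>{1..n}. \<bar>phi E n y v - F p k Q\<bar> > \<epsilon>}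
     \<le> measure_pmf.prob (Pi_pmf {1..n} False P)
     {y. \<exists>v\<in>{1..n}. \<bar>phi E n y v - (\<Sum>w\<in>nbhd E n v. pmf (P w) True) / real (card (nbhd E n v))\<bar> \<ge> s}"
    unfolding em_step_def P_def[symmetric] by (rule measure_pmf.finite_measure_mono[OF sub]) simp
  also have "\<dots> \<le> real n * (2 * exp (-2 * s^2 * \<delta>))" by (rule union_conc[OF nb s]) auto
  finally show ?thesis unfolding s_def .
qed

lemma init_good:
  assumes nb: "\<And>v. v \<in> {1..n} \<Longrightarrow> nbhd E n v \<noteq> {} \<and> real (card (nbhd E n v)) \<ge> \<delta>"
    and q: "0 \<le> q" "q \<le> 1" and s: "0 \<le> s" "s \<le> \<epsilon>"
  shows "measure_pmf.prob (init_config n q) {x. \<exists>v\<in>{1..n}. \<bar>phi E n x v - q\<bar> > \<epsilon>}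
     \<le> real n * (2 * exp (-2 * s^2 * \<delta>))"
proof -
  define P where "P = (\<lambda>u::nat. bernoulli_pmf q)"
  have sub: "{x. \<exists>v\<in>{1..n}. \<bar>phi E n x v - q\<bar> > \<epsilon>} \<subseteq>
     {y. \<exists>v\<in>{1..n}. \<bar>phi E n y v - (\<Sum>w\<in>nbhd E n v. pmf (P w) True) / real (card (nbhd E n v))\<bar> \<ge> s}"
  proof (intro subsetI CollectI)
    fix y assume "y \<in> {x. \<exists>v\<in>{1..n}. \<bar>phi E n x v - q\<bar> > \<epsilon>}"
    then obtain v where v: "v \<in> {1..n}" "\<bar>phi E n y v - q\<bar> > \<epsilon>" by blast
    have finN: "finite (nbhd E n v)" unfolding nbhd_def by simp
    have d: "card (nbhd E n v) > 0" using nb[OF v(1)] finN by (simp add: card_gt_0_iff)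
    have "(\<Sum>w\<in>nbhd E n v. pmf (P w) True) / real (card (nbhd E n v)) = q"
      unfolding P_def using q d by simp
    then show "\<exists>v\<in>{1..n}. \<bar>phi E n y v - (\<Sum>w\<in>nbhd E n v. pmf (P w) True) / real (card (nbhd E n v))\<bar> \<ge> s"
      using v s by (intro bexI[OF _ v(1)]) auto
  qed
  have "measure_pmf.prob (init_config n q) {x. \<exists>v\<in>{1..n}. \<bar>phi E n x v - q\<bar> > \<epsilon>}
     \<le> measure_pmf.prob (Pi_pmf {1..n} False P)
     {y. \<exists>v\<in>{1..n}. \<bar>phi E n y v - (\<Sum>w\<in>nbhd E n v. pmf (P w) True) / real (card (nbhd E n v))\<bar> \<ge> s}"
    unfolding init_config_def P_def[symmetric] by (rule measure_pmf.finite_measure_mono[OF sub]) simp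
  also have "\<dots> \<le> real n * (2 * exp (-2 * s^2 * \<delta>))" by (rule union_conc[OF nb s(1)]) auto
  finally show ?thesis .
qed

lemma prob_bind_le:
  assumes h: "\<And>x. x \<in> set_pmf M \<Longrightarrow> measure_pmf.prob (f x) B \<le> indicator A x + \<beta>" and b: "\<beta> \<ge> 0"
  shows "measure_pmf.prob (bind_pmf M f) B \<le> measure_pmf.prob M A + \<beta>"
proof -
  have "emeasure (measure_pmf (bind_pmf M f)) B = (\<integral>\<^sup>+x. emeasure (measure_pmf (f x)) B \<partial>measure_pmf M)"
    by simp
  also have "\<dots> \<le> (\<integral>\<^sup>+x. (indicator A x + ennreal \<beta>) \<partial>measure_pmf M)"
  proof (rule nn_integral_mono_AE, rule AE_pmfI)
    fix x assume x: "x \<in> set_pmf M"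
    have "emeasure (measure_pmf (f x)) B = ennreal (measure_pmf.prob (f x) B)"
      by (simp add: measure_pmf.emeasure_eq_measure)
    also have "\<dots> \<le> ennreal (indicator A x + \<beta>)" using h[OF x] by (rule ennreal_leI)
    also have "\<dots> = indicator A x + ennreal \<beta>" using b by (simp add: indicator_def)
    finally show "emeasure (measure_pmf (f x)) B \<le> indicator A x + ennreal \<beta>" .
  qed
  also have "\<dots> = (\<integral>\<^sup>+x. indicator A x \<partial>measure_pmf M) + (\<integral>\<^sup>+x. ennreal \<beta> \<partial>measure_pmf M)"
    by (rule nn_integral_add) auto
  also have "\<dots> = emeasure (measure_pmf M) A + ennreal \<beta>"
    by (simp add: measure_pmf.emeasure_space_1)
  also have "\<dots> = ennreal (measure_pmf.prob M A + \<beta>)"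
    using b by (simp add: measure_pmf.emeasure_eq_measure ennreal_plus)
  finally have H: "emeasure (measure_pmf (bind_pmf M f)) B \<le> ennreal (measure_pmf.prob M A + \<beta>)" .
  then have "ennreal (measure_pmf.prob (bind_pmf M f) B) \<le> ennreal (measure_pmf.prob M A + \<beta>)"
    by (simp only: measure_pmf.emeasure_eq_measure)
  moreover have nn: "0 \<le> measure_pmf.prob M A + \<beta>" using b by simp
  ultimately show ?thesis by (metis ennreal_le_iff)
qed

lemma traj_len: "xs \<in> set_pmf (em_traj E n k p q T) \<Longrightarrow> length xs = Suc T"
  by (induction T arbitrary: xs) auto

definition goodT :: "(nat \<Rightarrow> nat \<Rightarrow> nat \<Rightarrow> bool) \<Rightarrow> nat \<Rightarrow> nat \<Rightarrow> real \<Rightarrow> real \<Rightarrow> real \<Rightarrow> nat \<Rightarrow> (nat \<Rightarrow> bool) list \<Rightarrow> bool" where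
  "goodT E n k p q \<epsilon> T xs = (\<forall>t \<le> T. \<forall>v\<in>{1..n}. \<bar>phi E n (xs ! t) v - (F p k ^^ t) q\<bar> \<le> \<epsilon>)"

lemma traj_bound:
  assumes nb: "\<And>v. v \<in> {1..n} \<Longrightarrow> nbhd E n v \<noteq> {} \<and> real (card (nbhd E n v)) \<ge> \<delta>"
    and p: "0 \<le> p" "p \<le> 1" and q: "0 \<le> q" "q \<le> 1"
    and lip: "\<And>y z. L' \<le> y \<Longrightarrow> y \<le> 1 \<Longrightarrow> L' \<le> z \<Longrightarrow> z \<le> 1 \<Longrightarrow> \<bar>F p k y - F p k z\<bar> \<le> c * \<bar>y - z\<bar>"
    and c: "0 \<le> c" "c < 1" and \<epsilon>: "\<epsilon> > 0"
    and traj: "\<And>t. L' + \<epsilon> \<le> (F p k ^^ t) q \<and> (F p k ^^ t) q \<le> 1"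
  shows "measure_pmf.prob (em_traj E n k p q T) {xs. \<not> goodT E n k p q \<epsilon> T xs}
     \<le> real (Suc T) * (real n * (2 * exp (-2 * ((1-c)*\<epsilon>)^2 * \<delta>)))"
proof (induction T)
  case 0
  have s: "0 \<le> (1-c)*\<epsilon>" "(1-c)*\<epsilon> \<le> \<epsilon>" using c \<epsilon> by (auto simp: mult_left_le_one_le)
  have "(\<lambda>x. [x]) -` {xs. \<not> goodT E n k p q \<epsilon> 0 xs} = {x. \<exists>v\<in>{1..n}. \<bar>phi E n x v - q\<bar> > \<epsilon>}"
    unfolding goodT_def by (auto simp: not_le)
  then show ?case using init_good[OF nb q s] by simp
next
  case (Suc T)
  define \<beta> where "\<beta> = real n * (2 * exp (-2 * ((1-c)*\<epsilon>)^2 * \<delta>))"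
  have b: "\<beta> \<ge> 0" unfolding \<beta>_def by simp
  let ?B = "{xs. \<not> goodT E n k p q \<epsilon> (Suc T) xs}"
  let ?A = "{xs. \<not> goodT E n k p q \<epsilon> T xs}"
  have "measure_pmf.prob (em_traj E n k p q (Suc T)) ?B \<le> measure_pmf.prob (em_traj E n k p q T) ?A + \<beta>"
    unfolding em_traj.simps(2)
  proof (rule prob_bind_le[OF _ b])
    fix xs assume xs: "xs \<in> set_pmf (em_traj E n k p q T)"
    have len: "length xs = Suc T" by (rule traj_len[OF xs])
    show "measure_pmf.prob (map_pmf (\<lambda>y. xs @ [y]) (em_step E n k p (last xs))) ?B \<le> indicator ?A xs + \<beta>"
    proof (cases "goodT E n k p q \<epsilon> T xs")
      case False
      have "measure_pmf.prob (map_pmf (\<lambda>y. xs @ [y]) (em_step E n k p (last xs))) ?B \<le> 1"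
        by (rule measure_pmf.prob_le_1)
      moreover have "indicator ?A xs = (1::real)" using False by (simp add: indicator_def)
      ultimately show ?thesis using b by linarith
    next
      case True
      define Q where "Q = (F p k ^^ T) q"
      have "xs \<noteq> []" using len by auto
      then have lastx: "last xs = xs ! T" using len by (simp add: last_conv_nth)
      have goodx: "\<bar>phi E n (last xs) w - Q\<bar> \<le> \<epsilon>" if "w \<in> {1..n}" for w
        using True that unfolding goodT_def lastx Q_def by auto
      have sub: "(\<lambda>y. xs @ [y]) -` ?B \<subseteq> {y. \<exists>v\<in>{1..n}. \<bar>phi E n y v - F p k Q\<bar> > \<epsilon>}"
      proof
        fix y assume "y \<in> (\<lambda>y. xs @ [y]) -` ?B"
        then obtain t v where tv: "t \<le> Suc T" "v \<in> {1..n}" "\<bar>phi E n ((xs @ [y]) ! t) v - (F p k ^^ t) q\<bar> > \<epsilon>"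
          unfolding goodT_def by (auto simp: not_le)
        show "y \<in> {y. \<exists>v\<in>{1..n}. \<bar>phi E n y v - F p k Q\<bar> > \<epsilon>}"
        proof (cases "t = Suc T")
          case True
          then have "(xs @ [y]) ! t = y" using len by (simp add: nth_append)
          then show ?thesis using tv True unfolding Q_def by auto
        next
          case False
          then have "t \<le> T" using tv by simp
          then have "(xs @ [y]) ! t = xs ! t" using len by (simp add: nth_append)
          then have "\<bar>phi E n (xs ! t) v - (F p k ^^ t) q\<bar> > \<epsilon>" using tv by simp
          then show ?thesis using \<open>t \<le> T\<close> tv(2) \<open>goodT E n k p q \<epsilon> T xs\<close> unfolding goodT_def by force
        qed
      qed
      have "measure_pmf.prob (map_pmf (\<lambda>y. xs @ [y]) (em_step E n k p (last xs))) ?B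
         = measure_pmf.prob (em_step E n k p (last xs)) ((\<lambda>y. xs @ [y]) -` ?B)" by simp
      also have "\<dots> \<le> measure_pmf.prob (em_step E n k p (last xs)) {y. \<exists>v\<in>{1..n}. \<bar>phi E n y v - F p k Q\<bar> > \<epsilon>}"
        by (rule measure_pmf.finite_measure_mono[OF sub]) simp
      also have "\<dots> \<le> \<beta>" unfolding \<beta>_def
        by (rule step_good[OF nb p lip c _ _ \<epsilon> goodx]) (use traj[of T] in \<open>auto simp: Q_def\<close>)
      finally show ?thesis by (simp add: indicator_def)
    qed
  qed
  also have "\<dots> \<le> real (Suc T) * \<beta> + \<beta>" using Suc.IH unfolding \<beta>_def by simp
  also have "\<dots> = real (Suc (Suc T)) * \<beta>" by (simp add: algebra_simps)
  finally show ?case unfolding \<beta>_def .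
qed

lemma bound_tendsto:
  assumes K: "(K::real) > 0" and s: "s > 0"
    and deg: "(\<lambda>n. ln (real n)) \<in> o(\<lambda>n. real (min_degree E n))"
  shows "(\<lambda>n. real (Suc (nat \<lfloor>real n powr K\<rfloor>)) * (real n * (2 * exp (-2 * s^2 * real (min_degree E n)))))
         \<longlonglongrightarrow> 0"
proof -
  define C where "C = (K + 2) / (2 * s^2)"
  have C: "C > 0" unfolding C_def using K s by simp
  have "eventually (\<lambda>n. norm (ln (real n)) \<le> (1/C) * norm (real (min_degree E n))) sequentially"
    by (rule landau_o.smallD[OF deg]) (use C in simp)
  moreover have "eventually (\<lambda>n::nat. n \<ge> 1) sequentially" by (rule eventually_ge_at_top)
  ultimately have ev: "eventually (\<lambda>n. real (Suc (nat \<lfloor>real n powr K\<rfloor>)) * (real n * (2 * exp (-2 * s^2 * real (min_degree E n))))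
      \<le> (real n powr K + 1) * real n * 2 * real n powr (-(K+2))) sequentially"
  proof eventually_elim
    case (elim n)
    have n: "real n \<ge> 1" using elim(2) by simp
    have ln0: "ln (real n) \<ge> 0" using n by simp
    have "ln (real n) \<le> (1/C) * real (min_degree E n)" using elim(1) ln0 by simp
    then have "C * ln (real n) \<le> real (min_degree E n)" using C by (simp add: field_simps)
    then have h1: "-2 * s^2 * real (min_degree E n) \<le> -2 * s^2 * (C * ln (real n))"
      using s by (intro mult_left_mono_neg) auto
    have h2: "2 * s^2 * C = K + 2" unfolding C_def using s by simp
    have h3: "-2 * s^2 * (C * ln (real n)) = -(2 * s^2 * C) * ln (real n)" by (simp add: algebra_simps)
    have "-2 * s^2 * real (min_degree E n) \<le> -(K+2) * ln (real n)" using h1 unfolding h3 h2 .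
    then have "exp (-2 * s^2 * real (min_degree E n)) \<le> exp (-(K+2) * ln (real n))" by (rule exp_mono)
    also have "exp (-(K+2) * ln (real n)) = real n powr (-(K+2))" using n by (simp add: powr_def)
    finally have e: "exp (-2 * s^2 * real (min_degree E n)) \<le> real n powr (-(K+2))" .
    have x0: "\<lfloor>real n powr K\<rfloor> \<ge> 0" by simp
    have "real (nat \<lfloor>real n powr K\<rfloor>) = real_of_int \<lfloor>real n powr K\<rfloor>" using x0 by simp
    also have "\<dots> \<le> real n powr K" by (rule of_int_floor_le)
    finally have "real (nat \<lfloor>real n powr K\<rfloor>) \<le> real n powr K" .
    then have t: "real (Suc (nat \<lfloor>real n powr K\<rfloor>)) \<le> real n powr K + 1" by simp
    have "real (Suc (nat \<lfloor>real n powr K\<rfloor>)) * (real n * (2 * exp (-2 * s^2 * real (min_degree E n))))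
       \<le> (real n powr K + 1) * (real n * (2 * real n powr (-(K+2))))"
      using t e n by (intro mult_mono) auto
    then show ?case by (simp add: algebra_simps)
  qed
  have lim: "(\<lambda>n::nat. (real n powr K + 1) * real n * 2 * real n powr (-(K+2))) \<longlonglongrightarrow> 0"
    using K by real_asymp
  show ?thesis
    by (rule tendsto_sandwich[OF _ ev tendsto_const lim]) (auto intro!: always_eventually)
qed

theorem proposition5p11:
  fixes E :: "nat \<Rightarrow> nat \<Rightarrow> nat \<Rightarrow> bool" and k :: nat and p q :: real
  assumes sym: "\<And>n u v. E n u v = E n v u"
    and irrefl: "\<And>n u. \<not> E n u u"
    and deg: "(\<lambda>n. ln (real n)) \<in> o(\<lambda>n. real (min_degree E n))"
    and k: "odd k" "k \<ge> 3"
    and q: "1/2 < q" "q \<le> 1"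
    and p: "0 \<le> p" "p < pstar_q k q"
    and qmu: "mu p k < q"
    and gamma: "\<gamma> > 0" and K: "(K::real) > 0"
  shows "(\<lambda>n. measure_pmf.prob (em_traj E n k p q (nat \<lfloor>real n powr K\<rfloor>))
            {xs. \<forall>t \<le> nat \<lfloor>real n powr K\<rfloor>. \<forall>v \<in> {1..n}.
                   \<bar>phi E n (xs ! t) v - (F p k ^^ t) q\<bar> \<le> \<gamma>})
         \<longlonglongrightarrow> 1"
proof -
  define m where "m = (k+1) div 2"
  obtain j where j: "k = 2*j + 1" using k(1) by (elim oddE)
  have m: "m \<ge> 2" "k = 2*m-1" using j k(2) unfolding m_def by auto
  have pq: "pstar_q k q \<le> pst m" by (rule pstar_q_le[OF m(1) m(2) q])
  have p': "0 \<le> p" "p < pst m" using p pq by auto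
  have p1: "p \<le> 1" using p' pst_bounds[OF m(1)] by simp
  obtain L L' c where pkg: "0 \<le> L'" "L' < L" "L \<le> q" "0 \<le> c" "c < 1"
    and trajL: "\<And>t. L \<le> (F p k ^^ t) q \<and> (F p k ^^ t) q \<le> 1"
    and lip: "\<And>y z. L' \<le> y \<Longrightarrow> y \<le> 1 \<Longrightarrow> L' \<le> z \<Longrightarrow> z \<le> 1 \<Longrightarrow> \<bar>F p k y - F p k z\<bar> \<le> c * \<bar>y - z\<bar>"
    using contraction_pkg[OF m(1) m(2) p' qmu q(2)] by blast
  define \<epsilon> where "\<epsilon> = min \<gamma> (L - L')"
  have \<epsilon>: "\<epsilon> > 0" "\<epsilon> \<le> \<gamma>" "L' + \<epsilon> \<le> L" using gamma pkg unfolding \<epsilon>_def by auto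
  have traj: "L' + \<epsilon> \<le> (F p k ^^ t) q \<and> (F p k ^^ t) q \<le> 1" for t
    using trajL[of t] \<epsilon>(3) by linarith
  define s where "s = (1-c)*\<epsilon>"
  have s: "s > 0" unfolding s_def using pkg \<epsilon> by simp
  define T where "T = (\<lambda>n::nat. nat \<lfloor>real n powr K\<rfloor>)"
  define bnd where "bnd = (\<lambda>n::nat. real (Suc (T n)) * (real n * (2 * exp (-2 * s^2 * real (min_degree E n)))))"
  define Pr where "Pr = (\<lambda>n. measure_pmf.prob (em_traj E n k p q (T n))
            {xs. \<forall>t \<le> T n. \<forall>v \<in> {1..n}. \<bar>phi E n (xs ! t) v - (F p k ^^ t) q\<bar> \<le> \<gamma>})"
  have bnd0: "bnd \<longlonglongrightarrow> 0" unfolding bnd_def T_def by (rule bound_tendsto[OF K s deg])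
  have q0: "0 \<le> q" using q by simp
  have "eventually (\<lambda>n. real (min_degree E n) > 0) sequentially"
  proof -
    have "eventually (\<lambda>n. norm (ln (real n)) \<le> 1 * norm (real (min_degree E n))) sequentially"
      by (rule landau_o.smallD[OF deg]) simp
    moreover have "eventually (\<lambda>n::nat. n \<ge> 3) sequentially" by (rule eventually_ge_at_top)
    ultimately show ?thesis
    proof eventually_elim
      case (elim n)
      have "ln (real n) > 0" using elim(2) by simp
      then show ?case using elim(1) by simp
    qed
  qed
  moreover have "eventually (\<lambda>n::nat. n \<ge> 1) sequentially" by (rule eventually_ge_at_top)
  ultimately have ev: "eventually (\<lambda>n. 1 - bnd n \<le> Pr n) sequentially"
  proof eventually_elim
    case (elim n)
    define \<delta> where "\<delta> = real (min_degree E n)"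
    have nb: "nbhd E n v \<noteq> {} \<and> real (card (nbhd E n v)) \<ge> \<delta>" if v: "v \<in> {1..n}" for v
    proof -
      have fin: "finite ((\<lambda>u. card (nbhd E n u)) ` {1..n})" by simp
      have "min_degree E n \<le> card (nbhd E n v)" unfolding min_degree_def
        using v by (intro Min_le fin) auto
      then have c: "real (card (nbhd E n v)) \<ge> \<delta>" unfolding \<delta>_def by simp
      then have "card (nbhd E n v) > 0" using elim(1) unfolding \<delta>_def by linarith
      then show ?thesis using c by auto
    qed
    have tb: "measure_pmf.prob (em_traj E n k p q (T n)) {xs. \<not> goodT E n k p q \<epsilon> (T n) xs}
       \<le> real (Suc (T n)) * (real n * (2 * exp (-2 * ((1-c)*\<epsilon>)^2 * \<delta>)))"
      by (rule traj_bound[OF nb p(1) p1 q0 q(2) lip pkg(4) pkg(5) \<epsilon>(1) traj])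
    have sub: "{xs. goodT E n k p q \<epsilon> (T n) xs} \<subseteq>
       {xs. \<forall>t \<le> T n. \<forall>v \<in> {1..n}. \<bar>phi E n (xs ! t) v - (F p k ^^ t) q\<bar> \<le> \<gamma>}"
      unfolding goodT_def using \<epsilon>(2) by force
    have "measure_pmf.prob (em_traj E n k p q (T n)) {xs. goodT E n k p q \<epsilon> (T n) xs}
        = 1 - measure_pmf.prob (em_traj E n k p q (T n)) {xs. \<not> goodT E n k p q \<epsilon> (T n) xs}"
    proof -
      have "{xs. goodT E n k p q \<epsilon> (T n) xs} = space (measure_pmf (em_traj E n k p q (T n))) - {xs. \<not> goodT E n k p q \<epsilon> (T n) xs}"
        by auto
      then show ?thesis using measure_pmf.prob_compl[of "{xs. \<not> goodT E n k p q \<epsilon> (T n) xs}" "em_traj E n k p q (T n)"]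
        by simp
    qed
    also have "\<dots> \<ge> 1 - bnd n" using tb unfolding bnd_def s_def \<delta>_def by simp
    finally have "1 - bnd n \<le> measure_pmf.prob (em_traj E n k p q (T n)) {xs. goodT E n k p q \<epsilon> (T n) xs}" .
    also have "\<dots> \<le> Pr n" unfolding Pr_def by (rule measure_pmf.finite_measure_mono[OF sub]) simp
    finally show ?case .
  qed
  have lower: "(\<lambda>n. 1 - bnd n) \<longlonglongrightarrow> 1" using tendsto_diff[OF tendsto_const bnd0, of 1] by simp
  have upper: "eventually (\<lambda>n. Pr n \<le> 1) sequentially"
    unfolding Pr_def by (intro always_eventually allI measure_pmf.prob_le_1)
  have "Pr \<longlonglongrightarrow> 1" by (rule tendsto_sandwich[OF ev upper lower tendsto_const])
  then show ?thesis unfolding Pr_def T_def .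
qed

end
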